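(* Let $\mathrm{R}$ be a real closed field, $\mathrm{C}=\mathrm{R}[i]$, let $F/G,\,H/I\in\mathrm{C}(Z)\setminus\{0\}$ and let $\Gamma=[x_0,x_1]\times[y_0,y_1]\subset\mathrm{R}^2$ with $x_0<x_1$, $y_0<y_1$. Then $$\mathrm{W}\Big(\frac FG\cdot\frac HI\ \Big|\ \partial\Gamma\Big)=\mathrm{W}(F/G\mid\partial\Gamma)+\mathrm{W}(H/I\mid\partial\Gamma).$$
   Context: For nonzero $P\in\mathrm{R}[X]$ and $x\in\mathrm{R}$ write uniquely $P=(X-x)^{\mathrm{mult}_x(P)}P_x$ with $P_x(x)\neq0$; for $P,Q\neq0$ set $\mathrm{val}_x(P/Q)=\mathrm{mult}_x(P)-\mathrm{mult}_x(Q)$. For $P,Q\in\mathrm{R}[X]$, $x\in\mathrm{R}$: $\mathrm{Ind}^+_x(P,Q)=\tfrac12\,\mathrm{sign}(P_x(x)Q_x(x))$ and $\mathrm{Ind}^-_x(P,Q)=\tfrac12(-1)^{\mathrm{val}_x(P/Q)}\mathrm{sign}(P_x(x)Q_x(x))$ if $P\ne0$, $Q\neq0$ and $\mathrm{val}_x(P/Q)<0$, and both are $0$ otherwise; $\mathrm{Ind}_x=\mathrm{Ind}^+_x-\mathrm{Ind}^-_x$. For $a<b$, $\mathrm{Ind}_a^b(P,Q)=\mathrm{Ind}_a^+(P,Q)+\sum_{x\in(a,b)}\mathrm{Ind}_x(P,Q)-\mathrm{Ind}_b^-(P,Q)$; $\mathrm{Ind}_a^b=-\mathrm{Ind}_b^a$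 if $b<a$, and $\mathrm{Ind}_a^a=0$. For $F\in\mathrm{C}[X,Y]$ let $F_{\rm re},F_{\rm im}\in\mathrm{R}[X,Y]$ with $F=F_{\rm re}+iF_{\rm im}$, and $\overline F=F_{\rm re}-iF_{\rm im}$. Define $\mathrm{w}(F\mid\partial\Gamma)=\tfrac12\big(\mathrm{Ind}_{x_0}^{x_1}(F_{\rm re}(T,y_0),F_{\rm im}(T,y_0))+\mathrm{Ind}_{y_0}^{y_1}(F_{\rm re}(x_1,T),F_{\rm im}(x_1,T))+\mathrm{Ind}_{x_1}^{x_0}(F_{\rm re}(T,y_1),F_{\rm im}(T,y_1))+\mathrm{Ind}_{y_1}^{y_0}(F_{\rm re}(x_0,T),F_{\rm im}(x_0,T))\big)$ and $\mathrm{W}(F\mid\partial\Gamma)=\tfrac12\big(\mathrm{w}(F\mid\partial\Gamma)+\mathrm{w}(iF\mid\partial\Gamma)\big)$. $\mathrm{C}[Z]\subset\mathrm{C}[X,Y]$ via $Z=X+iY$. For $F,G\in\mathrm{C}[X,Y]$, $G\neq0$, $\mathrm{W}(F/G\mid\partial\Gamma):=\mathrm{W}(F\overline G\mid\partial\Gamma)$ (independent of the representation). *)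

theory Defs
  imports "HOL-Computational_Algebra.Polynomial"
begin

class real_closed_field = linordered_field +
  assumes rcf_sqrt: "0 \<le> x \<Longrightarrow> \<exists>y. x = y * y"
  assumes rcf_odd_root: "odd n \<Longrightarrow> c n \<noteq> 0 \<Longrightarrow> \<exists>x. (\<Sum>i\<le>n. c i * x ^ i) = 0"

datatype 'a cpx = Cpx (Re_c: 'a) (Im_c: 'a)

lemma cpx_eqI: "Re_c x = Re_c y \<Longrightarrow> Im_c x = Im_c y \<Longrightarrow> x = y"
  by (cases x; cases y) auto

instantiation cpx :: (comm_ring_1) comm_ring_1
begin
definition "0 = Cpx 0 0"
definition "1 = Cpx 1 0"
definition "x + y = Cpx (Re_c x + Re_c y) (Im_c x + Im_c y)"
definition "x - y = Cpx (Re_c x - Re_c y) (Im_c x - Im_c y)"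
definition "- x = Cpx (- Re_c x) (- Im_c x)"
definition "x * y = Cpx (Re_c x * Re_c y - Im_c x * Im_c y) (Re_c x * Im_c y + Im_c x * Re_c y)"
instance
  by standard (auto intro!: cpx_eqI simp: zero_cpx_def one_cpx_def plus_cpx_def minus_cpx_def
      uminus_cpx_def times_cpx_def algebra_simps)
end

definition ii :: "'a::comm_ring_1 cpx" where "ii = Cpx 0 1"
definition cnj :: "'a::comm_ring_1 cpx \<Rightarrow> 'a cpx" where "cnj z = Cpx (Re_c z) (- Im_c z)"

definition mult_at :: "'a::linordered_field \<Rightarrow> 'a poly \<Rightarrow> nat" where
  "mult_at x P = order x P"

definition cof_at :: "'a::linordered_field \<Rightarrow> 'a poly \<Rightarrow> 'a poly" where
  "cof_at x P = P div ([:-x, 1:] ^ mult_at x P)"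

definition val_at :: "'a::linordered_field \<Rightarrow> 'a poly \<Rightarrow> 'a poly \<Rightarrow> int" where
  "val_at x P Q = int (mult_at x P) - int (mult_at x Q)"

definition Ind_plus :: "'a::linordered_field \<Rightarrow> 'a poly \<Rightarrow> 'a poly \<Rightarrow> 'a" where
  "Ind_plus x P Q = (if P \<noteq> 0 \<and> Q \<noteq> 0 \<and> val_at x P Q < 0
      then sgn (poly (cof_at x P) x * poly (cof_at x Q) x) / 2 else 0)"

definition Ind_minus :: "'a::linordered_field \<Rightarrow> 'a poly \<Rightarrow> 'a poly \<Rightarrow> 'a" where
  "Ind_minus x P Q = (if P \<noteq> 0 \<and> Q \<noteq> 0 \<and> val_at x P Q < 0
      then (-1) powi (val_at x P Q) * sgn (poly (cof_at x P) x * poly (cof_at x Q) x) / 2 else 0)"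

definition Ind_at :: "'a::linordered_field \<Rightarrow> 'a poly \<Rightarrow> 'a poly \<Rightarrow> 'a" where
  "Ind_at x P Q = Ind_plus x P Q - Ind_minus x P Q"

text \<open>Index on [a,b] for a < b; the sum over (a,b) ranges over the (finite) support.\<close>
definition Ind_lt :: "'a::linordered_field \<Rightarrow> 'a \<Rightarrow> 'a poly \<Rightarrow> 'a poly \<Rightarrow> 'a" where
  "Ind_lt a b P Q = Ind_plus a P Q
     + (\<Sum>x\<in>{x. a < x \<and> x < b \<and> Ind_at x P Q \<noteq> 0}. Ind_at x P Q) - Ind_minus b P Q"

definition Ind :: "'a::linordered_field \<Rightarrow> 'a \<Rightarrow> 'a poly \<Rightarrow> 'a poly \<Rightarrow> 'a" where
  "Ind a b P Q = (if a < b then Ind_lt a b P Q else if b < a then - Ind_lt b a P Q else 0)"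

section \<open>Bivariate polynomials: 'c poly poly, outer variable Y, inner variable X\<close>

definition re2 :: "'a::comm_ring_1 cpx poly poly \<Rightarrow> 'a poly poly" where
  "re2 F = map_poly (map_poly Re_c) F"
definition im2 :: "'a::comm_ring_1 cpx poly poly \<Rightarrow> 'a poly poly" where
  "im2 F = map_poly (map_poly Im_c) F"
definition conj2 :: "'a::comm_ring_1 cpx poly poly \<Rightarrow> 'a cpx poly poly" where
  "conj2 F = map_poly (map_poly cnj) F"

text \<open>F(T, y) and F(x, T)\<close>
definition at_Y :: "'a::comm_ring_1 poly poly \<Rightarrow> 'a \<Rightarrow> 'a poly" where
  "at_Y F y = poly F [:y:]"
definition at_X :: "'a::comm_ring_1 poly poly \<Rightarrow> 'a \<Rightarrow> 'a poly" where
  "at_X F x = map_poly (\<lambda>p. poly p x) F"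

definition wind :: "'a::linordered_field cpx poly poly \<Rightarrow> 'a \<Rightarrow> 'a \<Rightarrow> 'a \<Rightarrow> 'a \<Rightarrow> 'a" where
  "wind F x0 x1 y0 y1 =
     (Ind x0 x1 (at_Y (re2 F) y0) (at_Y (im2 F) y0)
    + Ind y0 y1 (at_X (re2 F) x1) (at_X (im2 F) x1)
    + Ind x1 x0 (at_Y (re2 F) y1) (at_Y (im2 F) y1)
    + Ind y1 y0 (at_X (re2 F) x0) (at_X (im2 F) x0)) / 2"

definition Wind :: "'a::linordered_field cpx poly poly \<Rightarrow> 'a \<Rightarrow> 'a \<Rightarrow> 'a \<Rightarrow> 'a \<Rightarrow> 'a" where
  "Wind F x0 x1 y0 y1 = (wind F x0 x1 y0 y1 + wind ([:[:ii:]:] * F) x0 x1 y0 y1) / 2"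

text \<open>Embedding C[Z] into C[X,Y] via Z = X + iY\<close>
definition embedZ :: "'a::comm_ring_1 cpx poly \<Rightarrow> 'a cpx poly poly" where
  "embedZ F = poly (map_poly (\<lambda>c. [:[:c:]:]) F) [:[:0, 1:], [:ii:]:]"

text \<open>W(F/G | boundary) := W(F * conj G | boundary)\<close>
definition Wind_frac :: "'a::linordered_field cpx poly \<Rightarrow> 'a cpx poly \<Rightarrow> 'a \<Rightarrow> 'a \<Rightarrow> 'a \<Rightarrow> 'a \<Rightarrow> 'a" where
  "Wind_frac F G x0 x1 y0 y1 = Wind (embedZ F * conj2 (embedZ G)) x0 x1 y0 y1"

end

theory Submission
  imports Defs "HOL-Algebra.Algebraic_Closure_Type"
begin

hide_const (open) Polynomials.degree Polynomials.lead_coeff Coset.order up_ring.monom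
  up_ring.coeff module.smult


lemma map_poly_add_hom:
  assumes "f 0 = 0" "\<And>x y. f (x + y) = f x + f y"
  shows "map_poly f (p + q) = map_poly f p + map_poly f q"
  by (rule poly_eqI) (simp add: coeff_map_poly assms)

lemma map_poly_mult_hom:
  fixes f :: "'a::comm_semiring_1 \<Rightarrow> 'b::comm_semiring_1"
  assumes f0: "f 0 = 0" and fa: "\<And>x y. f (x + y) = f x + f y" and fm: "\<And>x y. f (x * y) = f x * f y"
  shows "map_poly f (p * q) = map_poly f p * map_poly f q"
proof (induction p)
  case 0 then show ?case by (simp add: f0)
next
  case (pCons a p)
  have sm: "map_poly f (smult a q) = smult (f a) (map_poly f q)"
    by (rule poly_eqI) (simp add: coeff_map_poly f0 fm)
  have "map_poly f (pCons a p * q) = map_poly f (smult a q + pCons 0 (p * q))" by simp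
  also have "\<dots> = smult (f a) (map_poly f q) + pCons 0 (map_poly f p * map_poly f q)"
    using pCons by (simp add: map_poly_add_hom[OF f0 fa] sm map_poly_pCons f0)
  also have "\<dots> = map_poly f (pCons a p) * map_poly f q"
    by (simp add: map_poly_pCons f0)
  finally show ?case .
qed

lemma poly_map_poly_hom:
  fixes f :: "'a::comm_semiring_1 \<Rightarrow> 'b::comm_semiring_1"
  assumes f0: "f 0 = 0" and fa: "\<And>x y. f (x + y) = f x + f y" and fm: "\<And>x y. f (x * y) = f x * f y"
  shows "poly (map_poly f p) (f x) = f (poly p x)"
  by (induction p) (simp_all add: map_poly_pCons f0 fa fm)

section \<open>The algebraic closure and the copy of R[i] inside it\<close>

lemma map_poly_to_ac_mult: "map_poly to_ac (p * q) = map_poly to_ac p * map_poly to_ac (q :: 'a::field poly)"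
  by (rule map_poly_mult_hom) simp_all

lemma map_poly_to_ac_add: "map_poly to_ac (p + q) = map_poly to_ac p + map_poly to_ac (q :: 'a::field poly)"
  by (rule map_poly_add_hom) simp_all

lemma poly_map_poly_to_ac: "poly (map_poly to_ac p) (to_ac x) = to_ac (poly p (x::'a::field))"
  by (rule poly_map_poly_hom) simp_all

definition jj :: "'a::field alg_closure" where "jj = (SOME z. z * z = -1)"

lemma jj_sq: "jj * jj = (-1 :: 'a::field alg_closure)"
proof -
  have "\<exists>z::'a alg_closure. poly [:1, 0, 1:] z = 0"
    by (rule alg_closed_imp_poly_has_root) simp
  then obtain z :: "'a alg_closure" where "1 + z * z = 0" by auto
  hence "z * z = -1" by (metis add.commute add_eq_0_iff2)
  hence "\<exists>z::'a alg_closure. z * z = -1" by blast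
  thus ?thesis unfolding jj_def by (rule someI_ex)
qed

definition inC :: "'a::field alg_closure \<Rightarrow> bool" where
  "inC z \<longleftrightarrow> (\<exists>a b. z = to_ac a + to_ac b * jj)"

lemma inC_to_ac [simp]: "inC (to_ac a)"
  unfolding inC_def by (rule exI[of _ a], rule exI[of _ 0]) simp

lemma inC_jj [simp]: "inC jj"
  unfolding inC_def by (rule exI[of _ 0], rule exI[of _ 1]) simp

lemma inC_add [intro]: "inC z \<Longrightarrow> inC w \<Longrightarrow> inC (z + w)"
proof -
  assume "inC z" "inC w"
  then obtain a b c d where z: "z = to_ac a + to_ac b * jj" and w: "w = to_ac c + to_ac d * jj"
    unfolding inC_def by blast
  have "z + w = to_ac (a + c) + to_ac (b + d) * jj" by (simp add: z w algebra_simps)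
  thus ?thesis unfolding inC_def by blast
qed

lemma inC_uminus [intro]: "inC z \<Longrightarrow> inC (- z)"
proof -
  assume "inC z"
  then obtain a b where z: "z = to_ac a + to_ac b * jj" unfolding inC_def by blast
  have "- z = to_ac (- a) + to_ac (- b) * jj" by (simp add: z algebra_simps)
  thus ?thesis unfolding inC_def by blast
qed

lemma inC_diff [intro]: "inC z \<Longrightarrow> inC w \<Longrightarrow> inC (z - w)"
  using inC_add[of z "- w"] inC_uminus[of w] by simp

lemma cmul_formula:
  "(to_ac a + to_ac b * jj) * (to_ac c + to_ac d * jj) =
   to_ac (a * c - b * d) + to_ac (a * d + b * c) * (jj :: 'a::field alg_closure)"
proof -
  have "(to_ac a + to_ac b * jj) * (to_ac c + to_ac d * jj) =
        to_ac a * to_ac c + (to_ac b * to_ac d) * (jj * jj) + (to_ac a * to_ac d + to_ac b * to_ac c) * (jj :: 'a alg_closure)"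
    by (simp only: distrib_left distrib_right mult.assoc mult.commute mult.left_commute add.assoc add.commute add.left_commute)
  also have "\<dots> = to_ac (a * c - b * d) + to_ac (a * d + b * c) * jj"
    by (simp add: jj_sq)
  finally show ?thesis .
qed

lemma inC_mult [intro]: "inC z \<Longrightarrow> inC w \<Longrightarrow> inC (z * w)"
proof -
  assume "inC z" "inC w"
  then obtain a b c d where z: "z = to_ac a + to_ac b * jj" and w: "w = to_ac c + to_ac d * jj"
    unfolding inC_def by blast
  show ?thesis unfolding inC_def z w cmul_formula by blast
qed

lemma indep_jj:
  fixes x y :: "'a::linordered_field"
  assumes "to_ac x + to_ac y * jj = 0"
  shows "x = 0 \<and> y = 0"
proof (cases "y = 0")
  case True thus ?thesis using assms by simp
next
  case False
  have "to_ac y * jj = - to_ac x" using assms by (simp add: add_eq_0_iff)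
  have ny: "to_ac y \<noteq> (0::'a alg_closure)" using False by simp
  have "jj = (to_ac y * jj) / to_ac y" using ny by simp
  also have "\<dots> = - to_ac x / to_ac y" using \<open>to_ac y * jj = - to_ac x\<close> by simp
  finally have "jj = to_ac (- x / y)" by simp
  hence "to_ac ((- x / y) * (- x / y)) = (-1 :: 'a alg_closure)"
    using jj_sq by (metis to_ac_mult)
  hence "(- x / y) * (- x / y) = -1"
    by (metis to_ac_1 to_ac_eq_iff to_ac_minus)
  moreover have "(- x / y) * (- x / y) \<ge> 0" by simp
  ultimately show ?thesis by simp
qed

lemma inC_inverse [intro]:
  fixes z :: "'a::linordered_field alg_closure"
  assumes "inC z" shows "inC (inverse z)"
proof -
  obtain a b where z: "z = to_ac a + to_ac b * jj" using assms unfolding inC_def by blast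
  show ?thesis
  proof (cases "z = 0")
    case True thus ?thesis using inC_to_ac[of 0] by simp
  next
    case False
    hence ab: "a \<noteq> 0 \<or> b \<noteq> 0" using z by auto
    hence n: "a * a + b * b \<noteq> 0"
      by (metis add_nonneg_eq_0_iff mult_eq_0_iff zero_le_square)
    have "z * (to_ac (a / (a*a+b*b)) + to_ac (- b / (a*a+b*b)) * jj) =
          to_ac (a * (a / (a*a+b*b)) - b * (- b / (a*a+b*b))) + to_ac (a * (- b / (a*a+b*b)) + b * (a / (a*a+b*b))) * jj"
      unfolding z by (rule cmul_formula)
    also have "a * (a / (a*a+b*b)) - b * (- b / (a*a+b*b)) = 1" using n
      by (simp add: diff_divide_distrib[symmetric] add_divide_distrib[symmetric])
    also have "a * (- b / (a*a+b*b)) + b * (a / (a*a+b*b)) = 0"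
      by (simp add: algebra_simps)
    finally have "z * (to_ac (a / (a*a+b*b)) + to_ac (- b / (a*a+b*b)) * jj) = 1" by simp
    hence "inverse z = to_ac (a / (a*a+b*b)) + to_ac (- b / (a*a+b*b)) * jj"
      by (rule inverse_unique)
    thus ?thesis unfolding inC_def by blast
  qed
qed

lemma inC_divide [intro]:
  fixes z :: "'a::linordered_field alg_closure"
  shows "inC z \<Longrightarrow> inC w \<Longrightarrow> inC (z / w)"
  by (simp add: divide_inverse inC_inverse inC_mult)

lemma rcf_sqrt_nonneg:
  fixes x :: "'a::real_closed_field"
  assumes "0 \<le> x" shows "\<exists>y\<ge>0. y * y = x"
proof -
  obtain y where "x = y * y" using rcf_sqrt[OF assms] by blast
  thus ?thesis by (intro exI[of _ "\<bar>y\<bar>"]) (simp add: abs_mult_self_eq)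
qed

lemma inC_sqrt:
  fixes z :: "'a::real_closed_field alg_closure"
  assumes "inC z" shows "\<exists>w. inC w \<and> w * w = z"
proof -
  obtain a b where z: "z = to_ac a + to_ac b * jj" using assms unfolding inC_def by blast
  obtain r where r: "r \<ge> 0" "r * r = a * a + b * b"
    using rcf_sqrt_nonneg[of "a * a + b * b"] by auto
  have ra: "\<bar>a\<bar> \<le> r"
  proof (rule ccontr)
    assume "\<not> \<bar>a\<bar> \<le> r"
    hence "r < \<bar>a\<bar>" by simp
    hence "r * r < \<bar>a\<bar> * \<bar>a\<bar>" using r(1) by (intro mult_strict_mono) auto
    thus False using r(2) by (simp add: abs_mult_self_eq)
  qed
  have "0 \<le> (r + a) / 2" "0 \<le> (r - a) / 2" using ra by auto
  then obtain u v0 where u: "u \<ge> 0" "u * u = (r + a) / 2" and v0: "v0 \<ge> 0" "v0 * v0 = (r - a) / 2"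
    using rcf_sqrt_nonneg by metis
  have "(2 * u * v0) * (2 * u * v0) = 4 * (u * u) * (v0 * v0)" by (simp add: algebra_simps)
  also have "\<dots> = (r + a) * (r - a)" by (simp add: u v0)
  also have "\<dots> = \<bar>b\<bar> * \<bar>b\<bar>" by (simp add: algebra_simps r(2) abs_mult_self_eq)
  finally have "2 * u * v0 = \<bar>b\<bar>"
    using u(1) v0(1) by (metis abs_ge_zero mult_nonneg_nonneg zero_le_numeral power2_eq_iff_nonneg power2_eq_square)
  define v where "v = (if b \<ge> 0 then v0 else - v0)"
  have uv: "2 * u * v = b" using \<open>2 * u * v0 = \<bar>b\<bar>\<close> by (auto simp: v_def)
  have vv: "v * v = (r - a) / 2" by (simp add: v_def v0)
  have "(to_ac u + to_ac v * jj) * (to_ac u + to_ac v * jj) =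
        to_ac (u * u - v * v) + to_ac (u * v + v * u) * jj"
    by (rule cmul_formula)
  also have "u * v + v * u = 2 * u * v" by simp
  also have "u * u - v * v = a" by (simp add: u vv field_simps)
  finally show ?thesis using uv z unfolding inC_def by blast
qed


section \<open>Newton identities\<close>

definition psum :: "'b::comm_ring_1 multiset \<Rightarrow> nat \<Rightarrow> 'b" where
  "psum B k = (\<Sum>b\<in>#B. b ^ k)"

definition Ep :: "'b::comm_ring_1 multiset \<Rightarrow> 'b poly" where
  "Ep B = (\<Prod>b\<in>#B. [:1, -b:])"

lemma psum_add_mset [simp]: "psum (add_mset b B) m = psum B m + b ^ m"
  by (simp add: psum_def add.commute)

lemma psum_empty [simp]: "psum {#} m = 0"
  by (simp add: psum_def)

lemma Ep_add_mset: "Ep (add_mset b B) = [:1, -b:] * Ep B"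
  by (simp add: Ep_def)

lemma coeff_Ep_0 [simp]: "coeff (Ep B) 0 = 1"
  by (induction B) (simp_all add: Ep_add_mset Ep_def coeff_mult_0)

lemma coeff_Ep_add_Suc:
  "coeff (Ep (add_mset b B)) (Suc i) = coeff (Ep B) (Suc i) - b * coeff (Ep B) i"
  by (simp add: Ep_add_mset)

lemma coeff_Ep_add_0:
  "coeff (Ep (add_mset b B)) 0 = coeff (Ep B) 0"
  by simp

lemma newton_identity:
  fixes B :: "'b::comm_ring_1 multiset"
  shows "(\<Sum>i\<le>k. coeff (Ep B) i * psum B (Suc k - i)) = - of_nat (Suc k) * coeff (Ep B) (Suc k)"
proof (induction B arbitrary: k)
  case empty
  show ?case by (simp add: Ep_def)
next
  case (add b B)
  define c where "c = coeff (Ep B)"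
  define c' where "c' = coeff (Ep (add_mset b B))"
  define p where "p = psum B"
  have c'0: "c' 0 = c 0" by (simp add: c'_def c_def)
  have c'S: "c' (Suc i) = c (Suc i) - b * c i" for i by (simp add: c'_def c_def coeff_Ep_add_Suc)
  have IH: "(\<Sum>i\<le>k. c i * p (Suc k - i)) = - of_nat (Suc k) * c (Suc k)" for k
    using add.IH[of k] by (simp add: c_def p_def)
  have aux: "(\<Sum>i<k. c i * p (k - i)) = - of_nat k * c k" for k
  proof (cases k)
    case 0 thus ?thesis by simp
  next
    case (Suc k') thus ?thesis using IH[of k'] by (simp add: lessThan_Suc_atMost)
  qed
  have S1: "(\<Sum>i\<le>k. c' i * b ^ (Suc k - i)) = c k * b" for k
  proof (induction k)
    case 0 thus ?case by (simp add: c'0)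
  next
    case (Suc k)
    have "(\<Sum>i\<le>Suc k. c' i * b ^ (Suc (Suc k) - i)) =
          (\<Sum>i\<le>k. c' i * b ^ (Suc (Suc k) - i)) + c' (Suc k) * b" by simp
    also have "(\<Sum>i\<le>k. c' i * b ^ (Suc (Suc k) - i)) = b * (\<Sum>i\<le>k. c' i * b ^ (Suc k - i))"
      by (simp add: sum_distrib_left Suc_diff_le algebra_simps)
    also have "\<dots> = b * (c k * b)" by (simp add: Suc.IH)
    finally show ?case by (simp add: c'S algebra_simps)
  qed
  have S2: "(\<Sum>i\<le>k. c' i * p (Suc k - i)) =
            (\<Sum>i\<le>k. c i * p (Suc k - i)) - b * (\<Sum>i<k. c i * p (k - i))" for k
  proof (cases k)
    case 0 thus ?thesis by (simp add: c'0)
  next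
    case (Suc k')
    have "(\<Sum>i\<le>Suc k'. c' i * p (Suc (Suc k') - i)) =
          c' 0 * p (Suc (Suc k')) + (\<Sum>i\<le>k'. c' (Suc i) * p (Suc k' - i))"
      by (subst sum.atMost_Suc_shift) simp
    also have "\<dots> = c 0 * p (Suc (Suc k')) + (\<Sum>i\<le>k'. c (Suc i) * p (Suc k' - i))
                     - b * (\<Sum>i\<le>k'. c i * p (Suc k' - i))"
      by (simp add: c'0 c'S algebra_simps sum_subtractf sum_distrib_left)
    also have "c 0 * p (Suc (Suc k')) + (\<Sum>i\<le>k'. c (Suc i) * p (Suc k' - i)) =
               (\<Sum>i\<le>Suc k'. c i * p (Suc (Suc k') - i))"
      by (subst sum.atMost_Suc_shift) simp
    finally show ?thesis using Suc by (simp add: lessThan_Suc_atMost)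
  qed
  have "(\<Sum>i\<le>k. c' i * psum (add_mset b B) (Suc k - i)) =
        (\<Sum>i\<le>k. c' i * p (Suc k - i)) + (\<Sum>i\<le>k. c' i * b ^ (Suc k - i))"
    by (simp add: p_def algebra_simps sum.distrib)
  also have "\<dots> = - of_nat (Suc k) * c (Suc k) + of_nat k * b * c k + c k * b"
    by (simp add: S1 S2 IH aux)
  also have "\<dots> = - of_nat (Suc k) * c' (Suc k)"
    by (simp add: c'S algebra_simps)
  finally show ?case by (simp add: c'_def)
qed

section \<open>Rationality over the base field\<close>

abbreviation inS :: "'a::field alg_closure \<Rightarrow> bool" where
  "inS z \<equiv> z \<in> range to_ac"

lemma inS_add [intro]: "inS z \<Longrightarrow> inS w \<Longrightarrow> inS (z + w)"
  by (auto simp flip: to_ac_add)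
lemma inS_mult [intro]: "inS z \<Longrightarrow> inS w \<Longrightarrow> inS (z * w)"
  by (auto simp flip: to_ac_mult)
lemma inS_diff [intro]: "inS z \<Longrightarrow> inS w \<Longrightarrow> inS (z - w)"
  by (auto simp flip: to_ac_diff)
lemma inS_uminus [intro]: "inS z \<Longrightarrow> inS (- z)"
  by (auto simp flip: to_ac_minus)
lemma inS_divide [intro]: "inS z \<Longrightarrow> inS w \<Longrightarrow> inS (z / w)"
  by (auto simp flip: to_ac_divide)
lemma inS_of_nat [intro]: "inS (of_nat n)"
  by (metis rangeI to_ac_of_nat)
lemma inS_0 [intro]: "inS 0" by (metis rangeI to_ac_0)
lemma inS_1 [intro]: "inS 1" by (metis rangeI to_ac_1)
lemma inS_power [intro]: "inS z \<Longrightarrow> inS (z ^ n)"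
  by (induction n) auto
lemma inS_sum [intro]: "(\<And>x. x \<in> A \<Longrightarrow> inS (f x)) \<Longrightarrow> inS (sum f A)"
  by (induction A rule: infinite_finite_induct) auto

lemma newton_psum_inS:
  fixes B :: "'a::field_char_0 alg_closure multiset"
  assumes "\<And>i. inS (coeff (Ep B) i)"
  shows "inS (psum B m)"
proof (induction m rule: less_induct)
  case (less m)
  show ?case
  proof (cases m)
    case 0
    have "psum B 0 = of_nat (size B)" by (simp add: psum_def)
    thus ?thesis using 0 by auto
  next
    case (Suc k)
    have "(\<Sum>i\<le>k. coeff (Ep B) i * psum B (Suc k - i)) =
          coeff (Ep B) 0 * psum B (Suc k - 0) + (\<Sum>i\<in>{..k} - {0}. coeff (Ep B) i * psum B (Suc k - i))"
      by (subst sum.remove[of _ 0]) auto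
    hence e: "psum B (Suc k) = - of_nat (Suc k) * coeff (Ep B) (Suc k) -
             (\<Sum>i\<in>{..k} - {0}. coeff (Ep B) i * psum B (Suc k - i))"
      using newton_identity[of B k] by (simp add: algebra_simps)
    have rest: "inS (\<Sum>i\<in>{..k} - {0}. coeff (Ep B) i * psum B (Suc k - i))"
      using less Suc assms by (intro inS_sum inS_mult) auto
    have "inS (- of_nat (Suc k) * coeff (Ep B) (Suc k) -
             (\<Sum>i\<in>{..k} - {0}. coeff (Ep B) i * psum B (Suc k - i)))"
      by (rule inS_diff[OF inS_mult[OF inS_uminus[OF inS_of_nat] assms] rest])
    thus ?thesis by (simp only: e Suc)
  qed
qed

lemma newton_coeff_inS:
  fixes B :: "'a::field_char_0 alg_closure multiset"
  assumes "\<And>m. inS (psum B m)"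
  shows "inS (coeff (Ep B) i)"
proof (induction i rule: less_induct)
  case (less i)
  show ?case
  proof (cases i)
    case 0 thus ?thesis by auto
  next
    case (Suc k)
    have nz: "of_nat (Suc k) \<noteq> (0 :: 'a alg_closure)" by (metis of_nat_eq_0_iff nat.distinct(1))
    have eq: "of_nat (Suc k) * coeff (Ep B) (Suc k) = - (\<Sum>i\<le>k. coeff (Ep B) i * psum B (Suc k - i))"
      using newton_identity[of B k] by (metis minus_minus mult_minus_left)
    have "coeff (Ep B) (Suc k) = - (\<Sum>i\<le>k. coeff (Ep B) i * psum B (Suc k - i)) / of_nat (Suc k)"
      using nz by (simp only: eq[symmetric]) (metis nonzero_mult_div_cancel_left)
    moreover have "inS (\<Sum>i\<le>k. coeff (Ep B) i * psum B (Suc k - i))"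
      using less Suc assms by (intro inS_sum inS_mult) auto
    ultimately show ?thesis using Suc by auto
  qed
qed

definition gp :: "'b::comm_ring_1 multiset \<Rightarrow> 'b poly" where
  "gp B = (\<Prod>b\<in>#B. [:-b, 1:])"

lemma gp_add: "gp (add_mset b B) = [:-b, 1:] * gp B"
  by (simp add: gp_def)

lemma gp_nz: "gp B \<noteq> (0 :: 'b::idom poly)"
  by (auto simp: gp_def)

lemma reflect_gp: "reflect_poly (gp B) = Ep (B :: 'b::idom multiset)"
proof (induction B)
  case empty thus ?case by (simp add: gp_def Ep_def)
next
  case (add b B)
  have r: "reflect_poly [:-b, 1:] = [:1, -b:]"
    by (rule poly_eqI) (auto simp: coeff_reflect_poly coeff_pCons split: nat.splits)
  have "reflect_poly (gp (add_mset b B)) = reflect_poly [:-b, 1:] * reflect_poly (gp B)"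
    by (simp only: gp_add reflect_poly_mult)
  also have "\<dots> = Ep (add_mset b B)" by (simp only: r add Ep_add_mset)
  finally show ?case .
qed

lemma degree_gp: "degree (gp B) = size (B :: 'b::idom multiset)"
proof (induction B)
  case empty thus ?case by (simp add: gp_def)
next
  case (add b B)
  have "degree ([:-b, 1:] * gp B) = degree [:-b, 1:] + degree (gp B)"
    by (rule degree_mult_eq) (simp_all add: gp_nz)
  thus ?case by (simp add: gp_add add)
qed

lemma poly_gp_eq_0: "poly (gp B) z = 0 \<longleftrightarrow> z \<in># (B :: 'b::idom multiset)"
  unfolding gp_def by (auto simp: poly_prod_mset image_iff)

lemma gp_coeffs_inS_iff:
  fixes B :: "'a::field alg_closure multiset"
  shows "(\<forall>i. inS (coeff (gp B) i)) \<longleftrightarrow> (\<forall>i. inS (coeff (Ep B) i))"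
proof
  assume H: "\<forall>i. inS (coeff (gp B) i)"
  show "\<forall>i. inS (coeff (Ep B) i)"
    using H unfolding reflect_gp[symmetric] by (auto simp: coeff_reflect_poly)
next
  assume H: "\<forall>i. inS (coeff (Ep B) i)"
  show "\<forall>i. inS (coeff (gp B) i)"
  proof
    fix i
    show "inS (coeff (gp B) i)"
    proof (cases "i \<le> degree (gp B)")
      case True
      have "coeff (Ep B) (degree (gp B) - i) = coeff (gp B) i"
        unfolding reflect_gp[symmetric] using True by (simp add: coeff_reflect_poly)
      thus ?thesis using H by metis
    next
      case False thus ?thesis by (simp add: coeff_eq_0)
    qed
  qed
qed


lemma sum_mset_mset_nth: "(\<Sum>b\<in>#mset xs. f b) = (\<Sum>i<length xs. f (xs ! i))"
proof -
  have "(\<Sum>b\<in>#mset xs. f b) = sum_list (map f xs)"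
    by (simp flip: sum_mset_sum_list)
  also have "\<dots> = (\<Sum>i<length xs. f (xs ! i))"
    by (simp add: sum_list_sum_nth atLeast0LessThan)
  finally show ?thesis .
qed

definition pairs :: "nat \<Rightarrow> (nat \<times> nat) set" where
  "pairs n = {(i, j). i < j \<and> j < n}"

lemma finite_pairs [simp]: "finite (pairs n)"
  by (rule finite_subset[of _ "{..<n} \<times> {..<n}"]) (auto simp: pairs_def)

lemma pairs_Suc: "pairs (Suc n) = pairs n \<union> (\<lambda>i. (i, n)) ` {..<n}"
  by (auto simp: pairs_def less_Suc_eq)

lemma sum_pairs_sym:
  fixes g :: "nat \<Rightarrow> nat \<Rightarrow> 'b::comm_semiring_1"
  assumes sym: "\<And>i j. g i j = g j i"
  shows "(\<Sum>i<n. \<Sum>j<n. g i j) = 2 * (\<Sum>(i, j)\<in>pairs n. g i j) + (\<Sum>i<n. g i i)"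
proof (induction n)
  case 0 thus ?case by (simp add: pairs_def)
next
  case (Suc n)
  have disj: "pairs n \<inter> (\<lambda>i. (i, n)) ` {..<n} = {}" by (auto simp: pairs_def)
  have "(\<Sum>(i, j)\<in>pairs (Suc n). g i j) = (\<Sum>(i, j)\<in>pairs n. g i j) + (\<Sum>(i, j)\<in>(\<lambda>i. (i, n)) ` {..<n}. g i j)"
    unfolding pairs_Suc by (rule sum.union_disjoint) (use disj in auto)
  also have "(\<Sum>(i, j)\<in>(\<lambda>i. (i, n)) ` {..<n}. g i j) = (\<Sum>i<n. g i n)"
    by (subst sum.reindex) (auto simp: inj_on_def)
  finally have P: "(\<Sum>(i, j)\<in>pairs (Suc n). g i j) = (\<Sum>(i, j)\<in>pairs n. g i j) + (\<Sum>i<n. g i n)" .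
  have "(\<Sum>i<Suc n. \<Sum>j<Suc n. g i j) = (\<Sum>i<n. \<Sum>j<n. g i j) + (\<Sum>i<n. g i n) + (\<Sum>j<n. g n j) + g n n"
    by (simp add: sum.distrib algebra_simps)
  also have "(\<Sum>j<n. g n j) = (\<Sum>i<n. g i n)" using sym by simp
  finally show ?case using Suc.IH P by (simp add: algebra_simps mult_2)
qed

lemma card_pairs: "2 * card (pairs n) = n * (n - 1)"
proof -
  have "(\<Sum>i<n. \<Sum>j<n. (1::nat)) = 2 * (\<Sum>(i, j)\<in>pairs n. (1::nat)) + (\<Sum>i<n. 1)"
    by (rule sum_pairs_sym) simp
  hence "n * n = 2 * card (pairs n) + n" by simp
  thus ?thesis by (simp add: algebra_simps diff_mult_distrib2)
qed

lemma double_sum_inS: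
  fixes x :: "nat \<Rightarrow> 'a::field alg_closure"
  assumes "finite M" "\<And>l. l \<in> M \<Longrightarrow> inS (\<alpha> l)" "\<And>m. inS (\<Sum>i<n. x i ^ m)"
  shows "inS (\<Sum>i<n. \<Sum>j<n. \<Sum>l\<in>M. \<alpha> l * x i ^ r l * x j ^ s l)"
proof -
  have "(\<Sum>i<n. \<Sum>j<n. \<Sum>l\<in>M. \<alpha> l * x i ^ r l * x j ^ s l) =
        (\<Sum>i<n. \<Sum>l\<in>M. \<Sum>j<n. \<alpha> l * x i ^ r l * x j ^ s l)"
    by (rule sum.cong[OF refl], rule sum.swap)
  also have "\<dots> = (\<Sum>l\<in>M. \<Sum>i<n. \<Sum>j<n. \<alpha> l * x i ^ r l * x j ^ s l)"
    by (rule sum.swap)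
  also have "\<dots> = (\<Sum>l\<in>M. \<alpha> l * ((\<Sum>i<n. x i ^ r l) * (\<Sum>j<n. x j ^ s l)))"
  proof (rule sum.cong[OF refl])
    fix l
    have "(\<Sum>i<n. x i ^ r l) * (\<Sum>j<n. x j ^ s l) = (\<Sum>i<n. \<Sum>j<n. x i ^ r l * x j ^ s l)"
      by (rule sum_product)
    thus "(\<Sum>i<n. \<Sum>j<n. \<alpha> l * x i ^ r l * x j ^ s l) = \<alpha> l * ((\<Sum>i<n. x i ^ r l) * (\<Sum>j<n. x j ^ s l))"
      by (simp add: sum_distrib_left mult.assoc)
  qed
  also have "inS \<dots>"
  proof (rule inS_sum)
    fix l assume "l \<in> M"
    show "inS (\<alpha> l * ((\<Sum>i<n. x i ^ r l) * (\<Sum>j<n. x j ^ s l)))"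
      by (rule inS_mult[OF assms(2)[OF \<open>l \<in> M\<close>] inS_mult[OF assms(3) assms(3)]])
  qed
  finally show ?thesis .
qed

lemma diag_sum_inS:
  fixes x :: "nat \<Rightarrow> 'a::field alg_closure"
  assumes "finite M" "\<And>l. l \<in> M \<Longrightarrow> inS (\<alpha> l)" "\<And>m. inS (\<Sum>i<n. x i ^ m)"
  shows "inS (\<Sum>i<n. \<Sum>l\<in>M. \<alpha> l * x i ^ r l * x i ^ s l)"
proof -
  have "(\<Sum>i<n. \<Sum>l\<in>M. \<alpha> l * x i ^ r l * x i ^ s l) = (\<Sum>l\<in>M. \<Sum>i<n. \<alpha> l * x i ^ (r l + s l))"
    by (subst sum.swap) (simp add: power_add mult.assoc)
  also have "\<dots> = (\<Sum>l\<in>M. \<alpha> l * (\<Sum>i<n. x i ^ (r l + s l)))"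
    by (simp add: sum_distrib_left)
  also have "inS \<dots>"
  proof (rule inS_sum)
    fix l assume "l \<in> M"
    show "inS (\<alpha> l * (\<Sum>i<n. x i ^ (r l + s l)))"
      by (rule inS_mult[OF assms(2)[OF \<open>l \<in> M\<close>] assms(3)])
  qed
  finally show ?thesis .
qed

lemma bt_power:
  fixes a b c :: "'b::comm_ring_1"
  shows "(a + b + c * a * b) ^ k =
    (\<Sum>l\<in>{..k} \<times> {..k}. (of_nat (k choose fst l) * of_nat ((k - fst l) choose snd l) * c ^ fst l)
         * a ^ (fst l + snd l) * b ^ (fst l + (k - fst l - snd l)))"
proof -
  have ab: "(a + b) ^ m = (\<Sum>u\<le>k. of_nat (m choose u) * a ^ u * b ^ (m - u))" if "m \<le> k" for m
  proof -
    have "(a + b) ^ m = (\<Sum>u\<le>m. of_nat (m choose u) * a ^ u * b ^ (m - u))"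
      by (rule binomial_ring)
    also have "\<dots> = (\<Sum>u\<le>k. of_nat (m choose u) * a ^ u * b ^ (m - u))"
    proof (rule sum.mono_neutral_left)
      show "\<forall>u\<in>{..k} - {..m}. of_nat (m choose u) * a ^ u * b ^ (m - u) = 0"
      proof
        fix u assume "u \<in> {..k} - {..m}"
        hence "m < u" by auto
        hence "m choose u = 0" by (rule binomial_eq_0)
        thus "of_nat (m choose u) * a ^ u * b ^ (m - u) = 0" by (simp only: of_nat_0 mult_zero_left)
      qed
    qed (use that in auto)
    finally show ?thesis .
  qed
  have "(a + b + c * a * b) ^ k = (c * a * b + (a + b)) ^ k" by (simp add: add.commute)
  also have "\<dots> = (\<Sum>t\<le>k. of_nat (k choose t) * (c * a * b) ^ t * (a + b) ^ (k - t))"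
    by (rule binomial_ring)
  also have "\<dots> = (\<Sum>t\<le>k. \<Sum>u\<le>k. (of_nat (k choose t) * of_nat ((k - t) choose u) * c ^ t)
         * a ^ (t + u) * b ^ (t + (k - t - u)))"
  proof (rule sum.cong[OF refl])
    fix t assume "t \<in> {..k}"
    hence "(a + b) ^ (k - t) = (\<Sum>u\<le>k. of_nat ((k - t) choose u) * a ^ u * b ^ (k - t - u))"
      by (intro ab) auto
    thus "of_nat (k choose t) * (c * a * b) ^ t * (a + b) ^ (k - t) =
          (\<Sum>u\<le>k. (of_nat (k choose t) * of_nat ((k - t) choose u) * c ^ t) * a ^ (t + u) * b ^ (t + (k - t - u)))"
      by (simp add: sum_distrib_left power_mult_distrib power_add algebra_simps)
  qed
  also have "\<dots> = (\<Sum>l\<in>{..k} \<times> {..k}. (of_nat (k choose fst l) * of_nat ((k - fst l) choose snd l) * c ^ fst l)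
         * a ^ (fst l + snd l) * b ^ (fst l + (k - fst l - snd l)))"
    by (simp add: sum.cartesian_product')
  finally show ?thesis .
qed


lemma exists_two_power_odd: "0 < (n::nat) \<Longrightarrow> \<exists>e m. n = 2 ^ e * m \<and> odd m"
proof (induction n rule: less_induct)
  case (less n)
  show ?case
  proof (cases "odd n")
    case True thus ?thesis by (intro exI[of _ 0] exI[of _ n]) simp
  next
    case False
    then obtain n' where n': "n = 2 * n'" by (metis evenE)
    with less.prems have "n' < n" "0 < n'" by auto
    then obtain e m where "n' = 2 ^ e * m" "odd m" using less.IH by blast
    thus ?thesis using n' by (intro exI[of _ "Suc e"] exI[of _ m]) simp
  qed
qed

lemma odd_degree_root:
  fixes f :: "'a::real_closed_field poly"
  assumes "odd (degree f)"
  shows "\<exists>x. poly f x = 0"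
proof -
  have "f \<noteq> 0" using assms by (metis degree_0 odd_pos less_numeral_extra(3))
  hence "coeff f (degree f) \<noteq> 0" by simp
  then obtain x where "(\<Sum>i\<le>degree f. coeff f i * x ^ i) = 0"
    using rcf_odd_root[OF assms] by blast
  thus ?thesis by (metis poly_altdef)
qed

lemma laplace_step:
  fixes f :: "'a::real_closed_field poly"
  assumes IH: "\<And>g::'a poly. \<And>m. degree g = 2 ^ e * m \<Longrightarrow> odd m \<Longrightarrow>
                  \<exists>z. inC z \<and> poly (map_poly to_ac g) z = 0"
    and deg: "degree f = 2 ^ Suc e * m" and oddm: "odd m"
  shows "\<exists>z. inC z \<and> poly (map_poly to_ac f) z = 0"
proof -
  define n where "n = degree f"
  have npos: "0 < n" using deg oddm unfolding n_def by (metis odd_pos nat_0_less_mult_iff zero_less_power pos2)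
  have neven: "even n" using deg unfolding n_def by simp
  have fnz: "f \<noteq> 0" using npos unfolding n_def by auto
  define F where "F = map_poly to_ac f"
  have degF: "degree F = n" unfolding F_def n_def by (rule degree_map_poly) simp
  have Fnz: "F \<noteq> 0" using degF npos by auto
  have lcF: "lead_coeff F = to_ac (lead_coeff f)"
    unfolding F_def using degF by (simp add: coeff_map_poly F_def n_def)
  obtain A where sizeA: "size A = degree F" and fac: "F = smult (lead_coeff F) (\<Prod>x\<in>#A. [:-x, 1:])"
    using alg_closed_imp_factorization[OF Fnz] by blast
  have lcnz: "lead_coeff F \<noteq> 0" using Fnz by simp
  define L where "L = lead_coeff F"
  have fac': "F = smult L (gp A)" using fac by (simp add: gp_def L_def)
  have "smult (inverse L) F = smult (inverse L * L) (gp A)" by (subst fac') simp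
  hence gpA: "gp A = smult (inverse (lead_coeff F)) F"
    using lcnz by (simp add: L_def)
  have "\<forall>i. inS (coeff (gp A) i)"
    unfolding gpA by (auto simp: lcF F_def coeff_map_poly simp flip: to_ac_inverse to_ac_mult)
  hence "\<forall>i. inS (coeff (Ep A) i)" using gp_coeffs_inS_iff by blast
  hence psA: "inS (psum A k)" for k by (intro newton_psum_inS) auto
  obtain xs where xs: "mset xs = A" using ex_mset by blast
  have lenxs: "length xs = n" using sizeA degF xs by (metis size_mset)
  define x where "x i = xs ! i" for i
  have psx: "inS (\<Sum>i<n. x i ^ k)" for k
    using psA[of k] unfolding psum_def x_def by (simp add: sum_mset_mset_nth flip: xs lenxs)
  define bt where "bt c a b = a + b + to_ac c * a * b" for c :: 'a and a b :: "'a alg_closure"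
  define B where "B c = image_mset (\<lambda>(i, j). bt c (x i) (x j)) (mset_set (pairs n))" for c
  have sizeB: "size (B c) = card (pairs n)" for c by (simp add: B_def)
  have psB: "psum (B c) k = (\<Sum>(i, j)\<in>pairs n. bt c (x i) (x j) ^ k)" for c k
    by (simp add: psum_def B_def multiset.map_comp sum_unfold_sum_mset case_prod_beta comp_def)
  have psB_inS: "inS (psum (B c) k)" for c k
  proof -
    define \<alpha> where "\<alpha> l = of_nat (k choose fst l) * of_nat ((k - fst l) choose snd l) * to_ac c ^ fst l" for l :: "nat \<times> nat"
    define r where "r l = fst l + snd l" for l :: "nat \<times> nat"
    define s where "s l = fst l + (k - fst l - snd l)" for l :: "nat \<times> nat"
    have btk: "bt c a b ^ k = (\<Sum>l\<in>{..k} \<times> {..k}. \<alpha> l * a ^ r l * b ^ s l)" for a b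
      unfolding bt_def \<alpha>_def r_def s_def by (rule bt_power)
    have \<alpha>S: "inS (\<alpha> l)" for l unfolding \<alpha>_def by (intro inS_mult inS_power) auto
    have D: "inS (\<Sum>i<n. \<Sum>j<n. bt c (x i) (x j) ^ k)"
      unfolding btk by (rule double_sum_inS) (auto simp: \<alpha>S psx)
    have Dg: "inS (\<Sum>i<n. bt c (x i) (x i) ^ k)"
      unfolding btk by (rule diag_sum_inS) (auto simp: \<alpha>S psx)
    have "(\<Sum>i<n. \<Sum>j<n. bt c (x i) (x j) ^ k) =
          2 * (\<Sum>(i, j)\<in>pairs n. bt c (x i) (x j) ^ k) + (\<Sum>i<n. bt c (x i) (x i) ^ k)"
      by (rule sum_pairs_sym) (simp add: bt_def algebra_simps)
    hence "psum (B c) k = ((\<Sum>i<n. \<Sum>j<n. bt c (x i) (x j) ^ k) - (\<Sum>i<n. bt c (x i) (x i) ^ k)) / 2"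
      by (simp add: psB)
    also have "inS \<dots>" using D Dg by (intro inS_divide inS_diff) (auto intro: rangeI[of to_ac 2, simplified])
    finally show ?thesis .
  qed
  have gpB: "\<forall>i. inS (coeff (gp (B c)) i)" for c
    using gp_coeffs_inS_iff[of "B c"] newton_coeff_inS[of "B c"] psB_inS by blast
  define h where "h c = map_poly of_ac (gp (B c))" for c
  have hB: "map_poly to_ac (h c) = gp (B c)" for c
    by (rule poly_eqI) (simp add: h_def coeff_map_poly to_ac_of_ac gpB)
  have degh: "degree (h c) = card (pairs n)" for c
  proof -
    have "degree (h c) = degree (map_poly to_ac (h c))" by (rule degree_map_poly[symmetric]) simp
    thus ?thesis by (simp add: hB degree_gp sizeB)
  qed
  have cardP: "card (pairs n) = 2 ^ e * (m * (n - 1))"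
  proof -
    have "2 * card (pairs n) = n * (n - 1)" by (rule card_pairs)
    also have "\<dots> = 2 * (2 ^ e * (m * (n - 1)))" using deg unfolding n_def by simp
    finally show ?thesis by simp
  qed
  have oddm': "odd (m * (n - 1))" using oddm neven npos by simp
  have ex: "\<exists>p\<in>pairs n. inC (bt c (x (fst p)) (x (snd p)))" for c
  proof -
    obtain z where z: "inC z" "poly (map_poly to_ac (h c)) z = 0"
      using IH[of "h c" "m * (n - 1)"] degh cardP oddm' by auto
    hence "z \<in># B c" using hB poly_gp_eq_0 by metis
    then obtain p where "p \<in> pairs n" "z = bt c (x (fst p)) (x (snd p))"
      unfolding B_def by (auto simp: case_prod_beta)
    thus ?thesis using z by blast
  qed
  define N where "N = card (pairs n)"
  define pr where "pr k = (SOME p. p \<in> pairs n \<and> inC (bt (of_nat k) (x (fst p)) (x (snd p))))" for k :: nat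
  have pr: "pr k \<in> pairs n \<and> inC (bt (of_nat k) (x (fst (pr k))) (x (snd (pr k))))" for k
  proof -
    have "\<exists>p. p \<in> pairs n \<and> inC (bt (of_nat k) (x (fst p)) (x (snd p)))" using ex[of "of_nat k"] by blast
    from someI_ex[OF this] show ?thesis unfolding pr_def .
  qed
  have "\<not> inj_on pr {..N}"
  proof
    assume "inj_on pr {..N}"
    hence "card {..N} \<le> card (pairs n)"
      by (rule card_inj_on_le) (use pr in auto)
    thus False by (simp add: N_def)
  qed
  then obtain k1 k2 where k12: "k1 \<noteq> k2" "pr k1 = pr k2"
    unfolding inj_on_def by blast
  define i where "i = fst (pr k1)"
  define j where "j = snd (pr k1)"
  define a where "a = x i"
  define b where "b = x j"
  have C1: "inC (a + b + to_ac (of_nat k1) * a * b)" using pr[of k1] unfolding a_def b_def i_def j_def bt_def by simp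
  have C2: "inC (a + b + to_ac (of_nat k2) * a * b)" using pr[of k2] k12 unfolding a_def b_def i_def j_def bt_def by simp
  have nzd: "to_ac (of_nat k1 - of_nat k2 :: 'a) \<noteq> 0" using k12 by simp
  have "(a + b + to_ac (of_nat k1) * a * b) - (a + b + to_ac (of_nat k2) * a * b) = to_ac (of_nat k1 - of_nat k2 :: 'a) * (a * b)"
    by (simp add: algebra_simps)
  hence "a * b = ((a + b + to_ac (of_nat k1) * a * b) - (a + b + to_ac (of_nat k2) * a * b)) / to_ac (of_nat k1 - of_nat k2 :: 'a)"
    using nzd by (simp add: field_simps)
  hence Cp: "inC (a * b)" using C1 C2 by (metis inC_diff inC_divide inC_to_ac)
  have Cs: "inC (a + b)"
  proof -
    have "a + b = (a + b + to_ac (of_nat k1) * a * b) - to_ac (of_nat k1) * (a * b)" by (simp add: algebra_simps)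
    thus ?thesis using C1 Cp by (metis inC_diff inC_mult inC_to_ac)
  qed
  obtain w where w: "inC w" "w * w = (a + b) * (a + b) - 4 * (a * b)"
    using inC_sqrt[of "(a + b) * (a + b) - 4 * (a * b)"] Cs Cp
    by (metis inC_diff inC_mult inC_to_ac to_ac_numeral)
  have "(2 * a - (a + b) - w) * (2 * a - (a + b) + w) = (2 * a - (a + b)) * (2 * a - (a + b)) - w * w"
    by (simp add: algebra_simps)
  also have "\<dots> = 0" unfolding w(2) by (simp add: algebra_simps)
  finally have "2 * a - (a + b) - w = 0 \<or> 2 * a - (a + b) + w = 0" by simp
  hence "2 * a = (a + b) + w \<or> 2 * a = (a + b) - w" by (auto simp: algebra_simps)
  hence "a = ((a + b) + w) / 2 \<or> a = ((a + b) - w) / 2" by (auto simp: field_simps)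
  hence Ca: "inC a" using Cs w(1) by (metis inC_add inC_diff inC_divide inC_to_ac to_ac_numeral)
  have "i < n" using pr[of k1] unfolding i_def by (auto simp: pairs_def)
  hence "a \<in># A" unfolding a_def x_def using xs lenxs by (metis nth_mem set_mset_mset)
  hence "poly (gp A) a = 0" by (simp add: poly_gp_eq_0)
  hence "poly F a = 0" by (subst fac') simp
  thus ?thesis using Ca unfolding F_def by blast
qed

theorem rcf_complex_root:
  fixes f :: "'a::real_closed_field poly"
  assumes "0 < degree f"
  shows "\<exists>z. inC z \<and> poly (map_poly to_ac f) z = 0"
proof -
  have main: "\<forall>f::'a poly. \<forall>m. degree f = 2 ^ e * m \<longrightarrow> odd m \<longrightarrow> (\<exists>z. inC z \<and> poly (map_poly to_ac f) z = 0)" for e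
  proof (induction e)
    case 0
    show ?case
    proof (intro allI impI)
      fix f :: "'a poly" and m assume "degree f = 2 ^ 0 * m" "odd m"
      then obtain x where "poly f x = 0" using odd_degree_root by auto
      thus "\<exists>z. inC z \<and> poly (map_poly to_ac f) z = 0"
        by (intro exI[of _ "to_ac x"]) (simp add: poly_map_poly_to_ac)
    qed
  next
    case (Suc e)
    show ?case using laplace_step[of e] Suc.IH by blast
  qed
  obtain e m where "degree f = 2 ^ e * m" "odd m" using exists_two_power_odd[OF assms] by blast
  thus ?thesis using main by blast
qed


lemma poly_quadratic_root_jj:
  fixes a b :: "'a::field"
  shows "poly (map_poly to_ac [:a * a + b * b, - 2 * a, 1:]) (to_ac a + to_ac b * jj) = 0"
proof -
  define z where "z = to_ac a + to_ac b * jj"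
  have zz: "z * z = to_ac (a * a - b * b) + to_ac (a * b + b * a) * jj"
    unfolding z_def by (rule cmul_formula)
  have "poly (map_poly to_ac [:a * a + b * b, - 2 * a, 1:]) z =
        to_ac (a * a + b * b) + to_ac (- 2 * a) * z + z * z"
    by (simp add: map_poly_pCons algebra_simps)
  also have "\<dots> = to_ac (a * a + b * b + (- 2 * a) * a + (a * a - b * b)) +
                   to_ac ((- 2 * a) * b + (a * b + b * a)) * jj"
    unfolding zz by (simp add: z_def algebra_simps)
  also have "\<dots> = 0" by (simp add: algebra_simps)
  finally show ?thesis unfolding z_def .
qed

theorem rcf_sign_const:
  fixes p :: "'a::real_closed_field poly"
  assumes "u \<le> v" "\<And>x. u \<le> x \<Longrightarrow> x \<le> v \<Longrightarrow> poly p x \<noteq> 0"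
  shows "sgn (poly p u) = sgn (poly p v)"
  using assms(2)
proof (induction "degree p" arbitrary: p rule: less_induct)
  case (less p)
  show ?case
  proof (cases "degree p = 0")
    case True
    then obtain c where "p = [:c:]" by (metis degree_eq_zeroE)
    thus ?thesis by simp
  next
    case False
    then obtain z where z: "inC z" "poly (map_poly to_ac p) z = 0"
      using rcf_complex_root[of p] by auto
    then obtain a b where zab: "z = to_ac a + to_ac b * jj" unfolding inC_def by blast
    show ?thesis
    proof (cases "b = 0")
      case True
      hence "poly (map_poly to_ac p) (to_ac a) = 0" using z zab by simp
      hence pa: "poly p a = 0" by (simp add: poly_map_poly_to_ac)
      hence ao: "a < u \<or> v < a" using less.prems by (metis not_le)
      from pa obtain q where pq: "p = [:-a, 1:] * q" using poly_eq_0_iff_dvd by (metis dvdE)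
      have qnz: "q \<noteq> 0" using False pq by auto
      have dq: "degree q < degree p" unfolding pq using qnz by (subst degree_mult_eq) auto
      have "sgn (poly q u) = sgn (poly q v)"
        by (rule less.hyps[OF dq]) (use less.prems pq in auto)
      moreover have "sgn (u - a) = sgn (v - a)" using ao assms(1) by auto
      moreover have "poly p x = (x - a) * poly q x" for x by (simp add: pq algebra_simps)
      ultimately show ?thesis by (simp only: sgn_mult)
    next
      case False
      define q2 where "q2 = [:a * a + b * b, - 2 * a, 1:]"
      have q2z: "poly (map_poly to_ac q2) z = 0"
        unfolding q2_def zab by (rule poly_quadratic_root_jj)
      have dq2: "degree q2 = 2" by (simp add: q2_def)
      define d where "d = p div q2"
      define r where "r = p mod q2"
      have pdr: "p = d * q2 + r" by (simp add: d_def r_def)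
      have dr: "r = 0 \<or> degree r < 2" using degree_mod_less[of q2 p] dq2 by (auto simp: r_def q2_def)
      have rz: "poly (map_poly to_ac r) z = 0"
        using z(2) q2z by (simp add: pdr map_poly_to_ac_add map_poly_to_ac_mult)
      have "r = [:coeff r 0, coeff r 1:]"
        by (rule poly_eqI) (use dr in \<open>auto simp: coeff_pCons coeff_eq_0 split: nat.splits\<close>)
      then obtain r0 r1 where r01: "r = [:r0, r1:]" by blast
      have "poly (map_poly to_ac r) z = to_ac r0 + to_ac r1 * z"
        by (simp add: r01 map_poly_pCons)
      also have "\<dots> = to_ac (r0 + r1 * a) + to_ac (r1 * b) * jj"
        by (simp add: zab algebra_simps)
      finally have "r0 + r1 * a = 0 \<and> r1 * b = 0" using rz indep_jj by metis
      hence "r = 0" using False r01 by auto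
      hence pd: "p = d * q2" using pdr by simp
      have q2pos: "poly q2 x > 0" for x
      proof -
        have "poly q2 x = (x - a) * (x - a) + b * b" by (simp add: q2_def algebra_simps)
        moreover have "b * b > 0" using False by (metis mult_neg_neg mult_pos_pos linorder_neqE)
        moreover have "(x - a) * (x - a) \<ge> 0" by simp
        ultimately show ?thesis by linarith
      qed
      have dnz: "d \<noteq> 0" using pd \<open>degree p \<noteq> 0\<close> by auto
      have dd: "degree d < degree p" unfolding pd using dnz dq2 by (subst degree_mult_eq) (auto simp: q2_def)
      have "sgn (poly d u) = sgn (poly d v)"
        by (rule less.hyps[OF dd]) (use less.prems pd in auto)
      thus ?thesis using q2pos[of u] q2pos[of v] by (simp add: pd sgn_mult)
    qed
  qed
qed


lemma Re_c_0 [simp]: "Re_c 0 = 0" and Im_c_0 [simp]: "Im_c 0 = 0"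
  by (simp_all add: zero_cpx_def)
lemma Re_c_1 [simp]: "Re_c 1 = 1" and Im_c_1 [simp]: "Im_c 1 = 0"
  by (simp_all add: one_cpx_def)
lemma Re_c_add [simp]: "Re_c (x + y) = Re_c x + Re_c y" and Im_c_add [simp]: "Im_c (x + y) = Im_c x + Im_c y"
  by (simp_all add: plus_cpx_def)
lemma Re_c_diff [simp]: "Re_c (x - y) = Re_c x - Re_c y" and Im_c_diff [simp]: "Im_c (x - y) = Im_c x - Im_c y"
  by (simp_all add: minus_cpx_def)
lemma Re_c_uminus [simp]: "Re_c (- x) = - Re_c x" and Im_c_uminus [simp]: "Im_c (- x) = - Im_c x"
  by (simp_all add: uminus_cpx_def)
lemma Re_c_mult [simp]: "Re_c (x * y) = Re_c x * Re_c y - Im_c x * Im_c y"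
  and Im_c_mult [simp]: "Im_c (x * y) = Re_c x * Im_c y + Im_c x * Re_c y"
  by (simp_all add: times_cpx_def)
lemma Re_c_ii [simp]: "Re_c ii = 0" and Im_c_ii [simp]: "Im_c ii = 1"
  by (simp_all add: ii_def)
lemma Re_c_cnj [simp]: "Re_c (cnj z) = Re_c z" and Im_c_cnj [simp]: "Im_c (cnj z) = - Im_c z"
  by (simp_all add: cnj_def)

lemma Re_c_sum: "Re_c (sum f A) = (\<Sum>x\<in>A. Re_c (f x))"
  by (induction A rule: infinite_finite_induct) simp_all
lemma Im_c_sum: "Im_c (sum f A) = (\<Sum>x\<in>A. Im_c (f x))"
  by (induction A rule: infinite_finite_induct) simp_all

lemma Re_c_of_nat [simp]: "Re_c (of_nat n) = of_nat n" and Im_c_of_nat [simp]: "Im_c (of_nat n) = 0"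
  by (induction n) simp_all

lemma cpx_eq_iff: "x = y \<longleftrightarrow> Re_c x = Re_c y \<and> Im_c x = Im_c y"
  using cpx_eqI by blast

lemma cpx_eq_0_iff: "x = 0 \<longleftrightarrow> Re_c x = 0 \<and> Im_c x = 0"
  by (simp add: cpx_eq_iff)

lemma Cpx_simps [simp]: "Re_c (Cpx a b) = a" "Im_c (Cpx a b) = b" by simp_all

lemma ii_sq: "ii * ii = (-1 :: 'a::comm_ring_1 cpx)"
  by (simp add: cpx_eq_iff)

lemma cnj_mult: "cnj (x * y) = cnj x * cnj (y :: 'a::comm_ring_1 cpx)"
  by (simp add: cpx_eq_iff)
lemma cnj_add: "cnj (x + y) = cnj x + cnj (y :: 'a::comm_ring_1 cpx)"
  by (simp add: cpx_eq_iff)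
lemma cnj_0 [simp]: "cnj 0 = (0 :: 'a::comm_ring_1 cpx)"
  by (simp add: cpx_eq_iff)
lemma cnj_1 [simp]: "cnj 1 = (1 :: 'a::comm_ring_1 cpx)"
  by (simp add: cpx_eq_iff)

definition cinv :: "'a::linordered_field cpx \<Rightarrow> 'a cpx" where
  "cinv x = Cpx (Re_c x / (Re_c x * Re_c x + Im_c x * Im_c x)) (- Im_c x / (Re_c x * Re_c x + Im_c x * Im_c x))"

lemma cinv_mult: "a \<noteq> 0 \<Longrightarrow> cinv a * a = (1 :: 'a::linordered_field cpx)"
proof -
  assume "a \<noteq> 0"
  hence "Re_c a \<noteq> 0 \<or> Im_c a \<noteq> 0" by (simp add: cpx_eq_0_iff)
  hence n: "Re_c a * Re_c a + Im_c a * Im_c a \<noteq> 0"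
    by (metis add_nonneg_eq_0_iff mult_eq_0_iff zero_le_square)
  show ?thesis
    using n by (simp add: cpx_eq_iff cinv_def diff_divide_distrib[symmetric]
        add_divide_distrib[symmetric] algebra_simps)
qed

lemma cinv_0: "cinv 0 = (0 :: 'a::linordered_field cpx)"
  by (simp add: cinv_def cpx_eq_iff)

instantiation cpx :: (linordered_field) field
begin
definition inverse_cpx :: "'a cpx \<Rightarrow> 'a cpx" where "inverse_cpx = cinv"
definition divide_cpx :: "'a cpx \<Rightarrow> 'a cpx \<Rightarrow> 'a cpx" where "divide_cpx x y = x * cinv y"
instance by standard (simp_all add: inverse_cpx_def divide_cpx_def cinv_mult cinv_0)
end


definition rp :: "'a::comm_ring_1 cpx poly \<Rightarrow> 'a poly" where "rp A = map_poly Re_c A"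
definition ip :: "'a::comm_ring_1 cpx poly \<Rightarrow> 'a poly" where "ip A = map_poly Im_c A"
definition cr :: "'a::comm_ring_1 \<Rightarrow> 'a cpx" where "cr r = Cpx r 0"

lemma coeff_rp [simp]: "coeff (rp A) i = Re_c (coeff A i)"
  by (simp add: rp_def coeff_map_poly)
lemma coeff_ip [simp]: "coeff (ip A) i = Im_c (coeff A i)"
  by (simp add: ip_def coeff_map_poly)

lemma rp_add [simp]: "rp (A + B) = rp A + rp B" by (rule poly_eqI) simp
lemma ip_add [simp]: "ip (A + B) = ip A + ip B" by (rule poly_eqI) simp
lemma rp_uminus [simp]: "rp (- A) = - rp A" by (rule poly_eqI) simp
lemma ip_uminus [simp]: "ip (- A) = - ip A" by (rule poly_eqI) simp
lemma rp_0 [simp]: "rp 0 = 0" by (rule poly_eqI) simp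
lemma ip_0 [simp]: "ip 0 = 0" by (rule poly_eqI) simp

lemma rp_pCons [simp]: "rp (pCons a A) = pCons (Re_c a) (rp A)" by (rule poly_eqI) (simp add: coeff_pCons split: nat.splits)
lemma ip_pCons [simp]: "ip (pCons a A) = pCons (Im_c a) (ip A)" by (rule poly_eqI) (simp add: coeff_pCons split: nat.splits)
lemma rp_smult [simp]: "rp (smult c A) = smult (Re_c c) (rp A) - smult (Im_c c) (ip A)" by (rule poly_eqI) simp
lemma ip_smult [simp]: "ip (smult c A) = smult (Re_c c) (ip A) + smult (Im_c c) (rp A)" by (rule poly_eqI) (simp add: algebra_simps)

lemma rp_mult: "rp (A * B) = rp A * rp B - ip A * ip B"
  by (rule poly_eqI) (simp add: coeff_mult Re_c_sum sum_subtractf)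
lemma ip_mult: "ip (A * B) = rp A * ip B + ip A * rp B"
  by (rule poly_eqI) (simp add: coeff_mult Im_c_sum sum.distrib)

lemma rp_smult_ii: "rp (smult ii A) = - ip A" by (rule poly_eqI) simp
lemma ip_smult_ii: "ip (smult ii A) = rp A" by (rule poly_eqI) simp

lemma rp_ip_eq_0_iff: "A = 0 \<longleftrightarrow> rp A = 0 \<and> ip A = 0"
proof
  assume "rp A = 0 \<and> ip A = 0"
  hence "\<forall>i. Re_c (coeff A i) = 0 \<and> Im_c (coeff A i) = 0"
    by (metis coeff_ip coeff_rp coeff_0)
  thus "A = 0" by (intro poly_eqI) (simp add: cpx_eq_0_iff)
qed simp

lemma Re_c_cr [simp]: "Re_c (cr r) = r" and Im_c_cr [simp]: "Im_c (cr r) = 0"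
  by (simp_all add: cr_def)

lemma poly_rp: "Re_c (poly A (cr t)) = poly (rp A) t"
  by (induction A) (simp_all add: rp_def map_poly_pCons)
lemma poly_ip: "Im_c (poly A (cr t)) = poly (ip A) t"
  by (induction A) (simp_all add: ip_def map_poly_pCons)

definition sh :: "'a::comm_ring_1 cpx poly \<Rightarrow> 'a \<Rightarrow> 'a cpx poly" where
  "sh A x = pcompose A [:cr x, 1:]"

lemma rp_const [simp]: "rp [:c:] = [:Re_c c:]" by (rule poly_eqI) (simp add: coeff_pCons split: nat.splits)
lemma ip_const [simp]: "ip [:c:] = [:Im_c c:]" by (rule poly_eqI) (simp add: coeff_pCons split: nat.splits)
lemma rp_lin [simp]: "rp [:cr x, 1:] = [:x, 1:]" by (rule poly_eqI) (simp add: coeff_pCons split: nat.splits)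
lemma ip_lin [simp]: "ip [:cr x, 1:] = 0" by (rule poly_eqI) (simp add: coeff_pCons split: nat.splits)

lemma rp_sh: "rp (sh A x) = pcompose (rp A) [:x, 1:]"
  unfolding sh_def
proof (induction A)
  case 0 thus ?case by simp
next
  case (pCons a A)
  have "rp (pcompose (pCons a A) [:cr x, 1:]) = rp ([:a:] + [:cr x, 1:] * pcompose A [:cr x, 1:])"
    by (simp add: pcompose_pCons)
  also have "\<dots> = [:Re_c a:] + [:x, 1:] * pcompose (rp A) [:x, 1:]"
    by (simp add: rp_mult pCons)
  also have "\<dots> = pcompose (rp (pCons a A)) [:x, 1:]"
    by (simp add: rp_def map_poly_pCons pcompose_pCons)
  finally show ?case .
qed

lemma ip_sh: "ip (sh A x) = pcompose (ip A) [:x, 1:]"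
  unfolding sh_def
proof (induction A)
  case 0 thus ?case by simp
next
  case (pCons a A)
  have "ip (pcompose (pCons a A) [:cr x, 1:]) = ip ([:a:] + [:cr x, 1:] * pcompose A [:cr x, 1:])"
    by (simp add: pcompose_pCons)
  also have "\<dots> = [:Im_c a:] + [:x, 1:] * pcompose (ip A) [:x, 1:]"
    by (simp add: ip_mult pCons rp_sh[unfolded sh_def])
  also have "\<dots> = pcompose (ip (pCons a A)) [:x, 1:]"
    by (simp add: ip_def map_poly_pCons pcompose_pCons)
  finally show ?case .
qed

lemma sh_mult: "sh (A * B) x = sh A x * sh B x"
  by (simp add: sh_def pcompose_mult)

lemma sh_eq_0_iff: "sh A x = 0 \<longleftrightarrow> A = (0 :: 'a::linordered_field cpx poly)"
  by (simp add: sh_def pcompose_eq_0_iff)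

definition ordc :: "'b::zero poly \<Rightarrow> nat" where "ordc C = (LEAST i. coeff C i \<noteq> 0)"
definition lowc :: "'b::zero poly \<Rightarrow> 'b" where "lowc C = coeff C (ordc C)"

lemma lowc_nz: "C \<noteq> 0 \<Longrightarrow> lowc C \<noteq> 0"
  unfolding lowc_def ordc_def by (rule LeastI_ex) (metis leading_coeff_neq_0)

lemma coeff_below_ordc: "i < ordc C \<Longrightarrow> coeff C i = 0"
  unfolding ordc_def using not_less_Least by blast

lemma ordc_eqI: "coeff C k \<noteq> 0 \<Longrightarrow> (\<And>i. i < k \<Longrightarrow> coeff C i = 0) \<Longrightarrow> ordc C = k"
  unfolding ordc_def by (rule Least_equality) (auto simp: not_less[symmetric])

lemma ordc_mult_lowc:
  fixes C D :: "'b::idom poly"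
  assumes "C \<noteq> 0" "D \<noteq> 0"
  shows "ordc (C * D) = ordc C + ordc D \<and> lowc (C * D) = lowc C * lowc D"
proof -
  define m where "m = ordc C"
  define n where "n = ordc D"
  have cm: "coeff C i = 0" if "i < m" for i using that coeff_below_ordc m_def by blast
  have dn: "coeff D i = 0" if "i < n" for i using that coeff_below_ordc n_def by blast
  have top: "coeff (C * D) (m + n) = coeff C m * coeff D n"
  proof -
    have "coeff (C * D) (m + n) = (\<Sum>i\<le>m + n. coeff C i * coeff D (m + n - i))"
      by (rule coeff_mult)
    also have "\<dots> = coeff C m * coeff D (m + n - m) + (\<Sum>i\<in>{..m + n} - {m}. coeff C i * coeff D (m + n - i))"
      by (subst sum.remove[of _ m]) auto
    also have "(\<Sum>i\<in>{..m + n} - {m}. coeff C i * coeff D (m + n - i)) = 0"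
    proof (rule sum.neutral, rule ballI)
      fix i assume "i \<in> {..m + n} - {m}"
      hence "i < m \<or> m + n - i < n" by auto
      thus "coeff C i * coeff D (m + n - i) = 0" using cm dn by auto
    qed
    finally show ?thesis by simp
  qed
  have low: "coeff (C * D) k = 0" if "k < m + n" for k
  proof -
    have "coeff (C * D) k = (\<Sum>i\<le>k. coeff C i * coeff D (k - i))" by (rule coeff_mult)
    also have "\<dots> = 0"
    proof (rule sum.neutral, rule ballI)
      fix i assume "i \<in> {..k}"
      hence "i < m \<or> k - i < n" using that by auto
      thus "coeff C i * coeff D (k - i) = 0" using cm dn by auto
    qed
    finally show ?thesis .
  qed
  have nz: "coeff C m * coeff D n \<noteq> 0"
    using lowc_nz[OF assms(1)] lowc_nz[OF assms(2)] by (simp add: lowc_def m_def n_def)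
  have o: "ordc (C * D) = m + n" by (rule ordc_eqI) (use top nz low in auto)
  thus ?thesis using top by (simp add: lowc_def m_def n_def)
qed

lemma pcompose_power_left': "pcompose (p ^ n) q = (pcompose p q) ^ (n::nat)"
  for p q :: "'b::comm_semiring_1 poly"
proof (induction n)
  case 0 show ?case by (metis one_pCons pcompose_const power_0)
qed (simp add: pcompose_mult)

lemma coeff_xpow_mult: "coeff ([:0, 1:] ^ m * R) i = (if i < m then 0 else coeff R (i - m))"
proof (induction m arbitrary: i)
  case 0 thus ?case by simp
next
  case (Suc m)
  have "[:0, 1:] ^ Suc m * R = pCons 0 ([:0, 1:] ^ m * R)" by (simp add: algebra_simps)
  thus ?case using Suc by (cases i) (auto simp: coeff_pCons)
qed

lemma order_cof_decomp:
  fixes P :: "'a::linordered_field poly"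
  assumes "P \<noteq> 0"
  shows "P = [:-x, 1:] ^ order x P * cof_at x P" and "poly (cof_at x P) x \<noteq> 0"
proof -
  show P: "P = [:-x, 1:] ^ order x P * cof_at x P"
    unfolding cof_at_def mult_at_def using order_1[of x P] by (rule dvd_mult_div_cancel[symmetric])
  show "poly (cof_at x P) x \<noteq> 0"
  proof
    assume "poly (cof_at x P) x = 0"
    then obtain R where R: "cof_at x P = [:-x, 1:] * R" using poly_eq_0_iff_dvd by (metis dvdE)
    have "P = [:-x, 1:] ^ order x P * ([:-x, 1:] * R)" using P R by metis
    hence "P = [:-x, 1:] ^ Suc (order x P) * R" by (simp only: power_Suc2 mult.assoc)
    hence "[:-x, 1:] ^ Suc (order x P) dvd P" by (rule dvdI)
    thus False using order_2[OF assms] by blast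
  qed
qed

lemma coeff_sh_real:
  fixes P :: "'a::linordered_field poly"
  assumes "P \<noteq> 0"
  shows "i < order x P \<Longrightarrow> coeff (pcompose P [:x, 1:]) i = 0"
    and "coeff (pcompose P [:x, 1:]) (order x P) = poly (cof_at x P) x"
proof -
  have lin: "pcompose [:-x, 1:] [:x, 1:] = [:0, 1:]" by (simp add: pcompose_pCons)
  have "pcompose P [:x, 1:] = pcompose ([:-x, 1:] ^ order x P) [:x, 1:] * pcompose (cof_at x P) [:x, 1:]"
    by (subst order_cof_decomp(1)[OF assms]) (simp only: pcompose_mult)
  also have "pcompose ([:-x, 1:] ^ order x P) [:x, 1:] = [:0, 1:] ^ order x P"
    by (simp only: pcompose_power_left' lin)
  finally have e: "pcompose P [:x, 1:] = [:0, 1:] ^ order x P * pcompose (cof_at x P) [:x, 1:]" .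
  have c0: "coeff (pcompose (cof_at x P) [:x, 1:]) 0 = poly (cof_at x P) x"
    by (simp add: poly_0_coeff_0[symmetric] poly_pcompose)
  show "i < order x P \<Longrightarrow> coeff (pcompose P [:x, 1:]) i = 0"
    unfolding e coeff_xpow_mult by simp
  show "coeff (pcompose P [:x, 1:]) (order x P) = poly (cof_at x P) x"
    unfolding e coeff_xpow_mult using c0 by simp
qed


definition kA :: "'a::linordered_field cpx poly \<Rightarrow> 'a \<Rightarrow> nat" where "kA A x = ordc (sh A x)"
definition gam :: "'a::linordered_field cpx poly \<Rightarrow> 'a \<Rightarrow> 'a cpx" where "gam A x = lowc (sh A x)"
definition sR :: "'a::linordered_field poly \<Rightarrow> 'a \<Rightarrow> 'a" where "sR P x = sgn (poly (cof_at x P) x)"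
definition sL :: "'a::linordered_field poly \<Rightarrow> 'a \<Rightarrow> 'a" where "sL P x = (-1) ^ order x P * sR P x"

lemma sR_0 [simp]: "sR 0 x = 0" by (simp add: sR_def cof_at_def)
lemma sL_0 [simp]: "sL 0 x = 0" by (simp add: sL_def)

lemma gam_nz: "A \<noteq> 0 \<Longrightarrow> gam A x \<noteq> 0"
  unfolding gam_def by (rule lowc_nz) (simp add: sh_eq_0_iff)

lemma Re_gam: "Re_c (gam A x) = coeff (pcompose (rp A) [:x, 1:]) (kA A x)"
  by (simp add: gam_def kA_def lowc_def flip: rp_sh)
lemma Im_gam: "Im_c (gam A x) = coeff (pcompose (ip A) [:x, 1:]) (kA A x)"
  by (simp add: gam_def kA_def lowc_def flip: ip_sh)

lemma rp_below_kA: "i < kA A x \<Longrightarrow> coeff (pcompose (rp A) [:x, 1:]) i = 0"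
  by (simp add: kA_def coeff_below_ordc flip: rp_sh)
lemma ip_below_kA: "i < kA A x \<Longrightarrow> coeff (pcompose (ip A) [:x, 1:]) i = 0"
  by (simp add: kA_def coeff_below_ordc flip: ip_sh)

lemma real_part_local:
  fixes P :: "'a::linordered_field poly"
  assumes below: "\<forall>i<k. coeff (pcompose P [:x, 1:]) i = 0"
    and g: "g = coeff (pcompose P [:x, 1:]) k"
  shows "P \<noteq> 0 \<Longrightarrow> k \<le> order x P"
    and "g \<noteq> 0 \<Longrightarrow> P \<noteq> 0 \<and> order x P = k \<and> g = poly (cof_at x P) x"
    and "g = 0 \<Longrightarrow> P \<noteq> 0 \<Longrightarrow> k < order x P"
proof -
  show le: "k \<le> order x P" if "P \<noteq> 0"
  proof (rule ccontr)
    assume "\<not> k \<le> order x P"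
    hence "coeff (pcompose P [:x, 1:]) (order x P) = 0" using below by auto
    thus False using coeff_sh_real(2)[OF that, of x] order_cof_decomp(2)[OF that, of x] by simp
  qed
  show "P \<noteq> 0 \<and> order x P = k \<and> g = poly (cof_at x P) x" if "g \<noteq> 0"
  proof -
    have P: "P \<noteq> 0" using that g by auto
    have "\<not> k < order x P" using coeff_sh_real(1)[OF P, of k x] that g by auto
    hence "order x P = k" using le[OF P] by simp
    thus ?thesis using P g coeff_sh_real(2)[OF P, of x] by simp
  qed
  show "k < order x P" if "g = 0" "P \<noteq> 0"
  proof -
    have "order x P \<noteq> k" using that g coeff_sh_real(2)[OF that(2), of x] order_cof_decomp(2)[OF that(2), of x] by auto
    thus ?thesis using le[OF that(2)] by simp
  qed
qed

lemma neg1_pow_double: "((-1::'a::comm_ring_1) ^ (b + b)) = 1"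
  by (induction b) simp_all

lemma neg1_powi: "((-1::'a::field) powi (int a - int b)) = (-1) ^ (a + b)"
proof (cases "b \<le> a")
  case True
  hence "int a - int b = int (a - b)" by simp
  hence "((-1::'a) powi (int a - int b)) = (-1) ^ (a - b)" by (simp only: power_int_of_nat)
  also have "\<dots> = (-1) ^ (a - b) * (-1) ^ (b + b)" by (simp only: neg1_pow_double mult_1_right)
  also have "\<dots> = (-1) ^ (a - b + (b + b))" by (simp only: power_add)
  also have "a - b + (b + b) = a + b" using True by simp
  finally show ?thesis .
next
  case False
  hence "int a - int b = - int (b - a)" by simp
  hence "((-1::'a) powi (int a - int b)) = inverse ((-1) ^ (b - a))" by (simp only: power_int_minus power_int_of_nat)
  also have "\<dots> = (-1) ^ (b - a)" by (simp only: inverse_minus_eq inverse_1 power_inverse[symmetric])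
  also have "\<dots> = (-1) ^ (b - a) * (-1) ^ (a + a)" by (simp only: neg1_pow_double mult_1_right)
  also have "\<dots> = (-1) ^ (b - a + (a + a))" by (simp only: power_add)
  also have "b - a + (a + a) = a + b" using False by simp
  finally show ?thesis .
qed

lemma cof_at_uminus: "cof_at x (- P) = - cof_at x P"
proof -
  have "- P = smult (-1) P" by simp
  hence "(- P) div q = smult (-1) (P div q)" for q by (metis div_smult_left)
  thus ?thesis by (simp add: cof_at_def mult_at_def)
qed

lemma Ind_plus_uminus: "Ind_plus x (- Q) P = - Ind_plus x Q P"
  by (simp add: Ind_plus_def val_at_def mult_at_def cof_at_uminus sgn_minus)
lemma Ind_minus_uminus: "Ind_minus x (- Q) P = - Ind_minus x Q P"
  by (simp add: Ind_minus_def val_at_def mult_at_def cof_at_uminus sgn_minus)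

lemma local_plus:
  fixes A :: "'a::linordered_field cpx poly"
  assumes A: "A \<noteq> 0"
  shows "Ind_plus x (rp A) (ip A) - Ind_plus x (ip A) (rp A) =
         (sgn (Re_c (gam A x)) * sR (ip A) x - sgn (Im_c (gam A x)) * sR (rp A) x) / 2"
proof -
  define P where "P = rp A"
  define Q where "Q = ip A"
  define k where "k = kA A x"
  have belowP: "\<forall>i<k. coeff (pcompose P [:x, 1:]) i = 0" using rp_below_kA unfolding P_def k_def by blast
  have gP: "Re_c (gam A x) = coeff (pcompose P [:x, 1:]) k" unfolding P_def k_def by (rule Re_gam)
  have belowQ: "\<forall>i<k. coeff (pcompose Q [:x, 1:]) i = 0" using ip_below_kA unfolding Q_def k_def by blast
  have gQ: "Im_c (gam A x) = coeff (pcompose Q [:x, 1:]) k" unfolding Q_def k_def by (rule Im_gam)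
  note RP = real_part_local[OF belowP gP]
  note IP = real_part_local[OF belowQ gQ]
  have gnz: "Re_c (gam A x) \<noteq> 0 \<or> Im_c (gam A x) \<noteq> 0" using gam_nz[OF A, of x] by (simp add: cpx_eq_0_iff)
  show ?thesis
  proof (cases "P = 0 \<or> Q = 0")
    case True
    thus ?thesis
    proof
      assume P0: "P = 0"
      have "Re_c (gam A x) = 0" using RP(2) P0 by blast
      thus ?thesis using P0 by (simp add: Ind_plus_def flip: P_def Q_def)
    next
      assume Q0: "Q = 0"
      have "Im_c (gam A x) = 0" using IP(2) Q0 by blast
      thus ?thesis using Q0 by (simp add: Ind_plus_def flip: P_def Q_def)
    qed
  next
    case False
    hence P: "P \<noteq> 0" and Q: "Q \<noteq> 0" by auto
    consider "Re_c (gam A x) \<noteq> 0" "Im_c (gam A x) \<noteq> 0" | "Re_c (gam A x) \<noteq> 0" "Im_c (gam A x) = 0"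
      | "Re_c (gam A x) = 0" "Im_c (gam A x) \<noteq> 0" using gnz by blast
    thus ?thesis
    proof cases
      case 1
      thus ?thesis using RP(2)[OF 1(1)] IP(2)[OF 1(2)]
        by (simp add: Ind_plus_def val_at_def mult_at_def sR_def flip: P_def Q_def)
    next
      case 2
      have "order x P < order x Q" using RP(2)[OF 2(1)] IP(3)[OF 2(2) Q] by simp
      thus ?thesis using RP(2)[OF 2(1)] 2 P Q
        by (simp add: Ind_plus_def val_at_def mult_at_def sR_def sgn_mult flip: P_def Q_def)
    next
      case 3
      have "order x Q < order x P" using IP(2)[OF 3(2)] RP(3)[OF 3(1) P] by simp
      thus ?thesis using IP(2)[OF 3(2)] 3 P Q
        by (simp add: Ind_plus_def val_at_def mult_at_def sR_def sgn_mult mult.commute flip: P_def Q_def)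
    qed
  qed
qed

lemma local_minus:
  fixes A :: "'a::linordered_field cpx poly"
  assumes A: "A \<noteq> 0"
  shows "Ind_minus x (rp A) (ip A) - Ind_minus x (ip A) (rp A) =
         (sgn (Re_c (gam A x)) * ((-1) ^ kA A x * sL (ip A) x) - sgn (Im_c (gam A x)) * ((-1) ^ kA A x * sL (rp A) x)) / 2"
proof -
  define P where "P = rp A"
  define Q where "Q = ip A"
  define k where "k = kA A x"
  have belowP: "\<forall>i<k. coeff (pcompose P [:x, 1:]) i = 0" using rp_below_kA unfolding P_def k_def by blast
  have gP: "Re_c (gam A x) = coeff (pcompose P [:x, 1:]) k" unfolding P_def k_def by (rule Re_gam)
  have belowQ: "\<forall>i<k. coeff (pcompose Q [:x, 1:]) i = 0" using ip_below_kA unfolding Q_def k_def by blast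
  have gQ: "Im_c (gam A x) = coeff (pcompose Q [:x, 1:]) k" unfolding Q_def k_def by (rule Im_gam)
  note RP = real_part_local[OF belowP gP]
  note IP = real_part_local[OF belowQ gQ]
  have gnz: "Re_c (gam A x) \<noteq> 0 \<or> Im_c (gam A x) \<noteq> 0" using gam_nz[OF A, of x] by (simp add: cpx_eq_0_iff)
  have pp: "((-1::'a) ^ k) * (-1) ^ k = 1" by (simp flip: power_add)
  show ?thesis
  proof (cases "P = 0 \<or> Q = 0")
    case True
    thus ?thesis
    proof
      assume P0: "P = 0"
      have "Re_c (gam A x) = 0" using RP(2) P0 by blast
      thus ?thesis using P0 by (simp add: Ind_minus_def flip: P_def Q_def)
    next
      assume Q0: "Q = 0"
      have "Im_c (gam A x) = 0" using IP(2) Q0 by blast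
      thus ?thesis using Q0 by (simp add: Ind_minus_def flip: P_def Q_def)
    qed
  next
    case False
    hence P: "P \<noteq> 0" and Q: "Q \<noteq> 0" by auto
    consider "Re_c (gam A x) \<noteq> 0" "Im_c (gam A x) \<noteq> 0" | "Re_c (gam A x) \<noteq> 0" "Im_c (gam A x) = 0"
      | "Re_c (gam A x) = 0" "Im_c (gam A x) \<noteq> 0" using gnz by blast
    thus ?thesis
    proof cases
      case 1
      have o: "order x P = k" "order x Q = k" using RP(2)[OF 1(1)] IP(2)[OF 1(2)] by auto
      thus ?thesis using RP(2)[OF 1(1)] IP(2)[OF 1(2)]
        by (simp add: Ind_minus_def val_at_def mult_at_def sR_def sL_def algebra_simps flip: P_def Q_def k_def)
    next
      case 2
      have o: "order x P = k" "k < order x Q" using RP(2)[OF 2(1)] IP(3)[OF 2(2) Q] by auto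
      have e: "(-1::'a) ^ k * (-1) ^ order x Q = (-1) ^ (order x P + order x Q)" using o by (simp add: power_add)
      show ?thesis using RP(2)[OF 2(1)] 2 P Q o
        by (simp add: Ind_minus_def val_at_def mult_at_def sR_def sL_def sgn_mult neg1_powi e mult.assoc
            flip: P_def Q_def k_def)
    next
      case 3
      have o: "order x Q = k" "k < order x P" using IP(2)[OF 3(2)] RP(3)[OF 3(1) P] by auto
      have e: "(-1::'a) ^ k * (-1) ^ order x P = (-1) ^ (order x Q + order x P)" using o by (simp add: power_add)
      show ?thesis using IP(2)[OF 3(2)] 3 P Q o
        by (simp add: Ind_minus_def val_at_def mult_at_def sR_def sL_def sgn_mult neg1_powi e mult.assoc mult.left_commute
            flip: P_def Q_def k_def)
    qed
  qed
qed


section \<open>Quarter classes of complex numbers\<close>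

definition isg :: "'a::linordered_field \<Rightarrow> int" where
  "isg r = (if r > 0 then 1 else if r < 0 then -1 else 0)"

lemma isg_cases: "isg r \<in> {-1, 0, 1}" by (simp add: isg_def)
lemma isg_0_iff [simp]: "isg r = 0 \<longleftrightarrow> r = 0" by (simp add: isg_def)
lemma isg_uminus [simp]: "isg (- r) = - isg r" by (simp add: isg_def)
lemma of_int_isg: "of_int (isg r) = sgn r" by (simp add: isg_def sgn_if)
lemma isg_mult: "isg (r * s) = isg r * isg s"
  by (auto simp: isg_def zero_less_mult_iff mult_less_0_iff)
lemma isg_pos [simp]: "r > 0 \<Longrightarrow> isg r = 1" by (simp add: isg_def)

definition qcs :: "int \<Rightarrow> int \<Rightarrow> int" where
  "qcs a b = (if b = 0 then (if a > 0 then 0 else 4)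
              else if b > 0 then (if a > 0 then 1 else if a = 0 then 2 else 3)
              else (if a < 0 then 5 else if a = 0 then 6 else 7))"

definition qc :: "'a::linordered_field cpx \<Rightarrow> int" where
  "qc z = qcs (isg (Re_c z)) (isg (Im_c z))"

definition cres :: "int \<Rightarrow> int" where "cres n = (n + 3) mod 8 - 3"

lemma cres_mod: "cres n mod 8 = n mod 8"
  unfolding cres_def by (metis add_diff_cancel_right' mod_add_left_eq mod_diff_left_eq)

lemma cres_bounds: "-3 \<le> cres n \<and> cres n \<le> 4"
  unfolding cres_def by simp

lemma cres_cong: "m mod 8 = n mod 8 \<Longrightarrow> cres m = cres n"
  unfolding cres_def by (metis mod_add_left_eq)

definition Kw :: "'a::linordered_field cpx \<Rightarrow> 'a cpx \<Rightarrow> int" where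
  "Kw z1 z2 = cres (qc z1 + qc z2 - qc (z1 * z2))"

definition ioff :: "'a::linordered_field cpx \<Rightarrow> 'a cpx \<Rightarrow> int" where
  "ioff g w = isg (Re_c g) * isg (Im_c w) - isg (Im_c g) * isg (Re_c w)"

definition compat :: "'a::linordered_field cpx \<Rightarrow> 'a cpx \<Rightarrow> bool" where
  "compat g w \<longleftrightarrow> (Re_c g \<noteq> 0 \<longrightarrow> isg (Re_c w) = isg (Re_c g)) \<and> (Im_c g \<noteq> 0 \<longrightarrow> isg (Im_c w) = isg (Im_c g))"

lemma nz_pattern: "z \<noteq> 0 \<Longrightarrow> (isg (Re_c z), isg (Im_c z)) \<noteq> (0, 0)"
  by (auto simp: cpx_eq_0_iff)

lemma lemma_O_int:
  assumes "a \<in> {-1,0,1}" "b \<in> {-1,0,1}" "c \<in> {-1,0,1}" "d \<in> {-1,0,1::int}"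
    "(a, b) \<noteq> (0, 0)" "(c, d) \<noteq> (0, 0)" "a \<noteq> 0 \<longrightarrow> c = a" "b \<noteq> 0 \<longrightarrow> d = b"
  shows "(a * d - b * c) mod 8 = (qcs c d - qcs a b) mod 8 \<and> \<bar>a * d - b * c\<bar> \<le> 1"
  using assms(1-4) by (elim insertE emptyE; use assms(5-8) in \<open>simp add: qcs_def\<close>)

lemma lemma_O:
  fixes g w :: "'a::linordered_field cpx"
  assumes "g \<noteq> 0" "w \<noteq> 0" "compat g w"
  shows "ioff g w mod 8 = (qc w - qc g) mod 8 \<and> \<bar>ioff g w\<bar> \<le> 1"
  unfolding ioff_def qc_def
  by (rule lemma_O_int) (use assms isg_cases nz_pattern in \<open>auto simp: compat_def\<close>)

lemma qcs_rot_int: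
  assumes "a \<in> {-1,0,1}" "b \<in> {-1,0,1::int}" "(a, b) \<noteq> (0, 0)"
  shows "qcs (- b) a mod 8 = (qcs a b + 2) mod 8"
  using assms by (auto simp: qcs_def)

lemma qc_rot: "z \<noteq> 0 \<Longrightarrow> qc (ii * z) mod 8 = (qc z + 2) mod 8"
proof -
  assume z: "z \<noteq> 0"
  have "qc (ii * z) = qcs (- isg (Im_c z)) (isg (Re_c z))" by (simp add: qc_def)
  thus ?thesis unfolding qc_def using qcs_rot_int[OF isg_cases isg_cases nz_pattern[OF z]] by simp
qed

lemma ii_nz [simp]: "ii \<noteq> (0 :: 'a::linordered_field cpx)" by (simp add: cpx_eq_0_iff)

lemma qc_neg: "z \<noteq> 0 \<Longrightarrow> qc (- z) mod 8 = (qc z + 4) mod 8"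
proof -
  assume z: "z \<noteq> 0"
  have iz: "ii * z \<noteq> 0" using z ii_nz mult_eq_0_iff by blast
  have "- z = ii * (ii * z)" by (simp add: cpx_eq_iff)
  hence "qc (- z) mod 8 = (qc (ii * z) + 2) mod 8" using qc_rot[OF iz] by simp
  also have "\<dots> = (qc z + 4) mod 8"
  proof -
    have "8 dvd (qc (ii * z) - qc z - 2)" using qc_rot[OF z] mod_eq_dvd_iff by (metis diff_diff_eq)
    hence "8 dvd ((qc (ii * z) + 2) - (qc z + 4))" by (simp add: algebra_simps)
    thus ?thesis using mod_eq_dvd_iff by blast
  qed
  finally show ?thesis .
qed

lemma nz_mult_cpx: "z1 \<noteq> 0 \<Longrightarrow> z2 \<noteq> 0 \<Longrightarrow> z1 * z2 \<noteq> (0 :: 'a::linordered_field cpx)"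
  by simp

lemma Kw_rot1: "z1 \<noteq> 0 \<Longrightarrow> z2 \<noteq> 0 \<Longrightarrow> Kw (ii * z1) z2 = Kw z1 (z2 :: 'a::linordered_field cpx)"
proof -
  assume z: "z1 \<noteq> 0" "z2 \<noteq> 0"
  have "ii * z1 * z2 = ii * (z1 * z2)" by (simp add: mult.assoc)
  moreover have "z1 * z2 \<noteq> 0" using z mult_eq_0_iff by blast
  ultimately have "qc (ii * z1 * z2) mod 8 = (qc (z1 * z2) + 2) mod 8" using qc_rot by metis
  hence d1: "8 dvd (qc (ii * z1 * z2) - (qc (z1 * z2) + 2))" using mod_eq_dvd_iff by blast
  have d2: "8 dvd (qc (ii * z1) - (qc z1 + 2))" using qc_rot[OF z(1)] mod_eq_dvd_iff by blast
  have "(qc (ii * z1) + qc z2 - qc (ii * z1 * z2)) - (qc z1 + qc z2 - qc (z1 * z2)) =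
        (qc (ii * z1) - (qc z1 + 2)) - (qc (ii * z1 * z2) - (qc (z1 * z2) + 2))" by simp
  hence "8 dvd ((qc (ii * z1) + qc z2 - qc (ii * z1 * z2)) - (qc z1 + qc z2 - qc (z1 * z2)))"
    using d1 d2 by (metis dvd_diff)
  hence "(qc (ii * z1) + qc z2 - qc (ii * z1 * z2)) mod 8 = (qc z1 + qc z2 - qc (z1 * z2)) mod 8"
    using mod_eq_dvd_iff by blast
  thus ?thesis unfolding Kw_def by (rule cres_cong)
qed

lemma Kw_sym: "Kw z1 z2 = Kw z2 z1"
  by (simp add: Kw_def mult.commute add.commute)

lemma Kw_rot2: "z1 \<noteq> 0 \<Longrightarrow> z2 \<noteq> 0 \<Longrightarrow> Kw z1 (ii * z2) = Kw z1 (z2 :: 'a::linordered_field cpx)"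
  by (metis Kw_rot1 Kw_sym)

lemma Kw_neg1: "z1 \<noteq> 0 \<Longrightarrow> z2 \<noteq> 0 \<Longrightarrow> Kw (- z1) z2 = Kw z1 (z2 :: 'a::linordered_field cpx)"
proof -
  assume z: "z1 \<noteq> 0" "z2 \<noteq> 0"
  have "- z1 = ii * (ii * z1)" by (simp add: cpx_eq_iff)
  moreover have "ii * z1 \<noteq> 0" using z ii_nz mult_eq_0_iff by blast
  ultimately show ?thesis using Kw_rot1 z by metis
qed

lemma Kw_neg2: "z1 \<noteq> 0 \<Longrightarrow> z2 \<noteq> 0 \<Longrightarrow> Kw z1 (- z2) = Kw z1 (z2 :: 'a::linordered_field cpx)"
  by (metis Kw_neg1 Kw_sym)

lemma Kw_pow_ii1: "z1 \<noteq> 0 \<Longrightarrow> z2 \<noteq> 0 \<Longrightarrow> Kw (ii ^ n * z1) z2 = Kw z1 (z2 :: 'a::linordered_field cpx)"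
proof (induction n)
  case 0 thus ?case by simp
next
  case (Suc n)
  have "ii \<noteq> (0 :: 'a cpx)" by (simp add: cpx_eq_0_iff)
  hence nz: "ii ^ n * z1 \<noteq> 0" using Suc.prems by simp
  have "Kw (ii ^ Suc n * z1) z2 = Kw (ii * (ii ^ n * z1)) z2" by (simp add: mult.assoc)
  also have "\<dots> = Kw (ii ^ n * z1) z2" using Kw_rot1[OF nz Suc.prems(2)] .
  finally show ?case using Suc by simp
qed

lemma Kw_pow_ii2: "z1 \<noteq> 0 \<Longrightarrow> z2 \<noteq> 0 \<Longrightarrow> Kw z1 (ii ^ n * z2) = Kw z1 (z2 :: 'a::linordered_field cpx)"
  by (metis Kw_pow_ii1 Kw_sym)

lemma Kw_negpow: "z1 \<noteq> 0 \<Longrightarrow> z2 \<noteq> 0 \<Longrightarrow> Kw ((-1) ^ m * z1) ((-1) ^ n * z2) = Kw z1 (z2 :: 'a::linordered_field cpx)"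
proof -
  assume z: "z1 \<noteq> 0" "z2 \<noteq> 0"
  have a: "Kw ((-1) ^ m * z1) w = Kw z1 w" if "w \<noteq> 0" for w
    by (cases "even m") (simp_all add: Kw_neg1[OF z(1) that])
  have b: "Kw w ((-1) ^ n * z2) = Kw w z2" if "w \<noteq> 0" for w
    by (cases "even n") (simp_all add: Kw_neg2[OF that z(2)])
  have "(-1) ^ n * z2 \<noteq> 0" using z by simp
  thus ?thesis using a b z by simp
qed

lemma rotate_to_Q0:
  fixes z :: "'a::linordered_field cpx"
  assumes "z \<noteq> 0"
  shows "\<exists>j. Re_c (ii ^ j * z) > 0 \<and> Im_c (ii ^ j * z) \<ge> 0"
proof -
  have i2: "ii ^ 2 * z = - z" by (simp add: cpx_eq_iff power2_eq_square)
  have i3: "ii ^ 3 * z = - (ii * z)" by (simp add: cpx_eq_iff power3_eq_cube)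
  have nz: "Re_c z \<noteq> 0 \<or> Im_c z \<noteq> 0" using assms by (simp add: cpx_eq_0_iff)
  have disj: "(r>0 \<and> s\<ge>0) \<or> (r\<le>0 \<and> s>0) \<or> (r<0 \<and> s\<le>0) \<or> (r\<ge>0 \<and> s<0)"
    if "r \<noteq> 0 \<or> s \<noteq> 0" for r s :: 'a
    using that by (cases "r > 0"; cases "s > 0"; cases "r < 0"; cases "s < 0"; auto)
  consider "Re_c z > 0 \<and> Im_c z \<ge> 0" | "Re_c z \<le> 0 \<and> Im_c z > 0" | "Re_c z < 0 \<and> Im_c z \<le> 0" | "Re_c z \<ge> 0 \<and> Im_c z < 0"
    using disj[OF nz] by blast
  thus ?thesis
  proof cases
    case 1 thus ?thesis by (intro exI[of _ 0]) simp
  next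
    case 2 thus ?thesis by (intro exI[of _ 3]) (simp add: i3)
  next
    case 3 thus ?thesis by (intro exI[of _ 2]) (simp add: i2)
  next
    case 4 thus ?thesis by (intro exI[of _ 1]) simp
  qed
qed

lemma Kw_Q0:
  fixes z1 z2 :: "'a::linordered_field cpx"
  assumes "Re_c z1 > 0" "Im_c z1 \<ge> 0" "Re_c z2 > 0" "Im_c z2 \<ge> 0"
  shows "-2 \<le> Kw z1 z2 \<and> Kw z1 z2 \<le> 2"
proof -
  define a where "a = Re_c z1"
  define b where "b = Im_c z1"
  define c where "c = Re_c z2"
  define d where "d = Im_c z2"
  have ac: "a * c > 0" using assms by (simp add: a_def c_def)
  consider "b = 0" "d = 0" | "b = 0" "d > 0" | "b > 0" "d = 0" | "b > 0" "d > 0"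
    using assms unfolding b_def d_def by fastforce
  thus ?thesis
  proof cases
    case 1
    hence "qc z1 = 0" "qc z2 = 0" "qc (z1 * z2) = 0"
      using assms ac by (simp_all add: qc_def qcs_def a_def b_def c_def d_def)
    thus ?thesis by (simp add: Kw_def cres_def)
  next
    case 2
    have "a * d > 0" using assms 2 by (simp add: a_def)
    hence "qc z1 = 0" "qc z2 = 1" "qc (z1 * z2) = 1"
      using assms ac 2 by (simp_all add: qc_def qcs_def a_def b_def c_def d_def)
    thus ?thesis by (simp add: Kw_def cres_def)
  next
    case 3
    have "b * c > 0" using assms 3 by (simp add: c_def)
    hence "qc z1 = 1" "qc z2 = 0" "qc (z1 * z2) = 1"
      using assms ac 3 by (simp_all add: qc_def qcs_def a_def b_def c_def d_def)
    thus ?thesis by (simp add: Kw_def cres_def)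
  next
    case 4
    have "a * d + b * c > 0" using assms 4 ac by (simp add: a_def c_def add_pos_pos)
    hence im: "Im_c (z1 * z2) > 0" by (simp add: a_def b_def c_def d_def)
    have "qc z1 = 1" "qc z2 = 1" using assms 4 by (simp_all add: qc_def qcs_def a_def b_def c_def d_def)
    moreover have "qc (z1 * z2) \<in> {1, 2, 3}" using im by (auto simp: qc_def qcs_def isg_def)
    ultimately show ?thesis by (auto simp: Kw_def cres_def)
  qed
qed

lemma Kw_bound:
  fixes z1 z2 :: "'a::linordered_field cpx"
  assumes "z1 \<noteq> 0" "z2 \<noteq> 0"
  shows "-2 \<le> Kw z1 z2 \<and> Kw z1 z2 \<le> 2"
proof -
  obtain j where j: "Re_c (ii ^ j * z1) > 0" "Im_c (ii ^ j * z1) \<ge> 0" using rotate_to_Q0[OF assms(1)] by blast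
  obtain l where l: "Re_c (ii ^ l * z2) > 0" "Im_c (ii ^ l * z2) \<ge> 0" using rotate_to_Q0[OF assms(2)] by blast
  have "Kw (ii ^ j * z1) (ii ^ l * z2) = Kw z1 z2"
  proof -
    have "ii ^ l * z2 \<noteq> 0" using l(1) by (metis Re_c_0 less_irrefl)
    hence "Kw (ii ^ j * z1) (ii ^ l * z2) = Kw z1 (ii ^ l * z2)" using Kw_pow_ii1 assms by blast
    also have "\<dots> = Kw z1 z2" using Kw_pow_ii2 assms by blast
    finally show ?thesis .
  qed
  thus ?thesis using Kw_Q0[OF j l] by simp
qed

lemma L1:
  fixes g1 g2 w1 w2 :: "'a::linordered_field cpx"
  assumes nz: "g1 \<noteq> 0" "g2 \<noteq> 0" "w1 \<noteq> 0" "w2 \<noteq> 0"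
    and c: "compat g1 w1" "compat g2 w2" "compat (g1 * g2) (w1 * w2)"
  shows "ioff (g1 * g2) (w1 * w2) = ioff g1 w1 + ioff g2 w2 + Kw g1 g2 - Kw w1 w2"
proof -
  have nz12: "g1 * g2 \<noteq> 0" "w1 * w2 \<noteq> 0" using nz by simp_all
  note O1 = lemma_O[OF nz(1) nz(3) c(1)]
  note O2 = lemma_O[OF nz(2) nz(4) c(2)]
  note O12 = lemma_O[OF nz12 c(3)]
  note Kg = Kw_bound[OF nz(1,2)]
  note Kv = Kw_bound[OF nz(3,4)]
  have Kgm: "Kw g1 g2 mod 8 = (qc g1 + qc g2 - qc (g1 * g2)) mod 8" unfolding Kw_def by (rule cres_mod)
  have Kvm: "Kw w1 w2 mod 8 = (qc w1 + qc w2 - qc (w1 * w2)) mod 8" unfolding Kw_def by (rule cres_mod)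
  define D where "D = ioff (g1 * g2) (w1 * w2) - (ioff g1 w1 + ioff g2 w2 + Kw g1 g2 - Kw w1 w2)"
  have d1: "8 dvd (ioff (g1 * g2) (w1 * w2) - (qc (w1 * w2) - qc (g1 * g2)))" using O12 mod_eq_dvd_iff by blast
  have d2: "8 dvd (ioff g1 w1 - (qc w1 - qc g1))" using O1 mod_eq_dvd_iff by blast
  have d3: "8 dvd (ioff g2 w2 - (qc w2 - qc g2))" using O2 mod_eq_dvd_iff by blast
  have d4: "8 dvd (Kw g1 g2 - (qc g1 + qc g2 - qc (g1 * g2)))" using Kgm mod_eq_dvd_iff by blast
  have d5: "8 dvd (Kw w1 w2 - (qc w1 + qc w2 - qc (w1 * w2)))" using Kvm mod_eq_dvd_iff by blast
  have eq: "D = (ioff (g1 * g2) (w1 * w2) - (qc (w1 * w2) - qc (g1 * g2))) - (ioff g1 w1 - (qc w1 - qc g1))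
            - (ioff g2 w2 - (qc w2 - qc g2)) - (Kw g1 g2 - (qc g1 + qc g2 - qc (g1 * g2)))
            + (Kw w1 w2 - (qc w1 + qc w2 - qc (w1 * w2)))"
    unfolding D_def by (simp add: algebra_simps)
  have "8 dvd D" unfolding eq by (intro dvd_add dvd_diff d1 d2 d3 d4 d5)
  then obtain t where t: "D = 8 * t" by (elim dvdE)
  have b1: "-1 \<le> ioff g1 w1" "ioff g1 w1 \<le> 1" using O1 by (simp_all add: abs_le_iff)
  have b2: "-1 \<le> ioff g2 w2" "ioff g2 w2 \<le> 1" using O2 by (simp_all add: abs_le_iff)
  have b3: "-1 \<le> ioff (g1 * g2) (w1 * w2)" "ioff (g1 * g2) (w1 * w2) \<le> 1" using O12 by (simp_all add: abs_le_iff)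
  have "-7 \<le> D" "D \<le> 7" unfolding D_def using b1 b2 b3 Kg Kv by linarith+
  hence "-7 \<le> 8 * t" "8 * t \<le> 7" using t by simp_all
  hence "\<not> t \<ge> 1" "\<not> t \<le> -1" by linarith+
  hence "t = 0" by simp
  hence "D = 0" using t by simp
  thus ?thesis unfolding D_def by simp
qed


section \<open>Sampling lemmas (using the intermediate value property)\<close>

lemma sample_right:
  fixes P :: "'a::real_closed_field poly"
  assumes P: "P \<noteq> 0" and xt: "x < t" and nr: "\<forall>y. x < y \<and> y \<le> t \<longrightarrow> poly P y \<noteq> 0"
  shows "sgn (poly P t) = sR P x"
proof -
  define C where "C = cof_at x P"
  define m where "m = order x P"
  have PC: "P = [:-x, 1:] ^ m * C" unfolding C_def m_def by (rule order_cof_decomp(1)[OF P])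
  have Cx: "poly C x \<noteq> 0" unfolding C_def by (rule order_cof_decomp(2)[OF P])
  have Cnr: "poly C y \<noteq> 0" if "x \<le> y" "y \<le> t" for y
  proof (cases "y = x")
    case True thus ?thesis using Cx by simp
  next
    case False
    hence "poly P y \<noteq> 0" using nr that by auto
    thus ?thesis using PC by auto
  qed
  have "sgn (poly C x) = sgn (poly C t)" by (rule rcf_sign_const) (use xt Cnr in auto)
  moreover have "sgn (poly P t) = sgn ((t - x) ^ m) * sgn (poly C t)"
    by (subst PC) (simp add: sgn_mult)
  moreover have "sgn ((t - x) ^ m) = 1" using xt by simp
  ultimately show ?thesis by (simp add: sR_def C_def)
qed

lemma sample_left:
  fixes P :: "'a::real_closed_field poly"
  assumes P: "P \<noteq> 0" and tx: "t < x" and nr: "\<forall>y. t \<le> y \<and> y < x \<longrightarrow> poly P y \<noteq> 0"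
  shows "sgn (poly P t) = sL P x"
proof -
  define C where "C = cof_at x P"
  define m where "m = order x P"
  have PC: "P = [:-x, 1:] ^ m * C" unfolding C_def m_def by (rule order_cof_decomp(1)[OF P])
  have Cx: "poly C x \<noteq> 0" unfolding C_def by (rule order_cof_decomp(2)[OF P])
  have Cnr: "poly C y \<noteq> 0" if "t \<le> y" "y \<le> x" for y
  proof (cases "y = x")
    case True thus ?thesis using Cx by simp
  next
    case False
    hence "poly P y \<noteq> 0" using nr that by auto
    thus ?thesis using PC by auto
  qed
  have "sgn (poly C t) = sgn (poly C x)" by (rule rcf_sign_const) (use tx Cnr in auto)
  moreover have "sgn (poly P t) = sgn ((t - x) ^ m) * sgn (poly C t)"
    by (subst PC) (simp add: sgn_mult)
  moreover have "sgn ((t - x) ^ m) = (-1) ^ m" using tx by (simp add: power_sgn)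
  ultimately show ?thesis by (simp add: sL_def sR_def C_def m_def)
qed

definition nxt :: "'b::linorder set \<Rightarrow> 'b \<Rightarrow> 'b" where "nxt S x = Min {y\<in>S. x < y}"
definition prv :: "'b::linorder set \<Rightarrow> 'b \<Rightarrow> 'b" where "prv S y = Max {x\<in>S. x < y}"

lemma nxt_props:
  assumes "finite S" "z \<in> S" "x < z"
  shows "nxt S x \<in> S" "x < nxt S x" "\<And>y. y \<in> S \<Longrightarrow> x < y \<Longrightarrow> nxt S x \<le> y"
proof -
  have f: "finite {y\<in>S. x < y}" using assms(1) by simp
  have ne: "{y\<in>S. x < y} \<noteq> {}" using assms by auto
  have "nxt S x \<in> {y\<in>S. x < y}" unfolding nxt_def using Min_in[OF f ne] .
  thus "nxt S x \<in> S" "x < nxt S x" by auto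
  show "nxt S x \<le> y" if "y \<in> S" "x < y" for y
    unfolding nxt_def using that f by (intro Min_le) auto
qed

lemma prv_props:
  assumes "finite S" "z \<in> S" "z < y"
  shows "prv S y \<in> S" "prv S y < y" "\<And>x. x \<in> S \<Longrightarrow> x < y \<Longrightarrow> x \<le> prv S y"
proof -
  have f: "finite {x\<in>S. x < y}" using assms(1) by simp
  have ne: "{x\<in>S. x < y} \<noteq> {}" using assms by auto
  have "prv S y \<in> {x\<in>S. x < y}" unfolding prv_def using Max_in[OF f ne] .
  thus "prv S y \<in> S" "prv S y < y" by auto
  show "x \<le> prv S y" if "x \<in> S" "x < y" for x
    unfolding prv_def using that f by (intro Max_ge) auto
qed

lemma prv_nxt:
  assumes "finite S" "x \<in> S" "z \<in> S" "x < z"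
  shows "prv S (nxt S x) = x"
proof -
  note N = nxt_props[OF assms(1,3,4)]
  note Pr = prv_props[OF assms(1,2) N(2)]
  have "x \<le> prv S (nxt S x)" using Pr(3)[OF assms(2) N(2)] .
  moreover have "\<not> x < prv S (nxt S x)"
  proof
    assume "x < prv S (nxt S x)"
    hence "nxt S x \<le> prv S (nxt S x)" using N(3) Pr(1) by blast
    thus False using Pr(2) by simp
  qed
  ultimately show ?thesis by simp
qed

lemma nxt_prv:
  assumes "finite S" "y \<in> S" "z \<in> S" "z < y"
  shows "nxt S (prv S y) = y"
proof -
  note Pr = prv_props[OF assms(1,3,4)]
  note N = nxt_props[OF assms(1,2) Pr(2)]
  have "nxt S (prv S y) \<le> y" using N(3)[OF assms(2) Pr(2)] .
  moreover have "\<not> nxt S (prv S y) < y"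
  proof
    assume "nxt S (prv S y) < y"
    hence "nxt S (prv S y) \<le> prv S y" using Pr(3) N(1) by blast
    thus False using N(2) by simp
  qed
  ultimately show ?thesis by simp
qed

definition spec :: "'a::linordered_field \<Rightarrow> 'a \<Rightarrow> 'a poly list \<Rightarrow> 'a set" where
  "spec a b Ls = {a, b} \<union> {x. a < x \<and> x < b \<and> (\<exists>p\<in>set Ls. p \<noteq> 0 \<and> poly p x = 0)}"

lemma finite_spec: "finite (spec a b Ls)"
proof -
  have "{x. a < x \<and> x < b \<and> (\<exists>p\<in>set Ls. p \<noteq> 0 \<and> poly p x = 0)} \<subseteq> (\<Union>p\<in>{p\<in>set Ls. p \<noteq> 0}. {x. poly p x = 0})"
    by auto
  moreover have "finite (\<Union>p\<in>{p\<in>set Ls. p \<noteq> 0}. {x. poly p x = 0})"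
    by (auto intro: poly_roots_finite)
  ultimately show ?thesis unfolding spec_def by (meson finite_Un finite_insert finite_subset finite.emptyI)
qed

lemma spec_sub: "a < b \<Longrightarrow> spec a b Ls \<subseteq> {a..b}"
  by (auto simp: spec_def)

lemma spec_ab: "a \<in> spec a b Ls" "b \<in> spec a b Ls"
  by (auto simp: spec_def)

lemma spec_root: "p \<in> set Ls \<Longrightarrow> p \<noteq> 0 \<Longrightarrow> a < y \<Longrightarrow> y < b \<Longrightarrow> poly p y = 0 \<Longrightarrow> y \<in> spec a b Ls"
  by (auto simp: spec_def)

section \<open>Decomposition of the edge index\<close>

definition EE :: "'a::linordered_field \<Rightarrow> 'a \<Rightarrow> 'a cpx poly \<Rightarrow> 'a" where
  "EE a b A = Ind a b (rp A) (ip A) + Ind a b (- ip A) (rp A)"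

lemma Ind_at_uminus: "Ind_at x (- Q) P = - Ind_at x Q P"
  by (simp add: Ind_at_def Ind_plus_uminus Ind_minus_uminus)

lemma Ind_at_nz_root:
  assumes "Ind_at x P Q \<noteq> 0"
  shows "Q \<noteq> 0 \<and> poly Q x = 0"
proof -
  have "P \<noteq> 0 \<and> Q \<noteq> 0 \<and> val_at x P Q < 0"
    using assms by (auto simp: Ind_at_def Ind_plus_def Ind_minus_def split: if_splits)
  hence "Q \<noteq> 0" "order x Q \<noteq> 0" by (auto simp: val_at_def mult_at_def)
  thus ?thesis using order_root by blast
qed

lemma Ind_lt_superset:
  assumes "finite T" "T \<subseteq> {a<..<b}" "\<And>x. a < x \<Longrightarrow> x < b \<Longrightarrow> Ind_at x P Q \<noteq> 0 \<Longrightarrow> x \<in> T"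
  shows "Ind_lt a b P Q = Ind_plus a P Q + (\<Sum>x\<in>T. Ind_at x P Q) - Ind_minus b P Q"
proof -
  have "(\<Sum>x\<in>{x. a < x \<and> x < b \<and> Ind_at x P Q \<noteq> 0}. Ind_at x P Q) = (\<Sum>x\<in>T. Ind_at x P Q)"
    by (rule sum.mono_neutral_left) (use assms in auto)
  thus ?thesis by (simp add: Ind_lt_def)
qed

lemma EE_decomp:
  fixes A :: "'a::linordered_field cpx poly"
  assumes ab: "a < b" and inL: "rp A \<in> set Ls" "ip A \<in> set Ls"
  defines "S \<equiv> spec a b Ls"
  shows "EE a b A = (\<Sum>x\<in>{x\<in>S. x < b}. Ind_plus x (rp A) (ip A) - Ind_plus x (ip A) (rp A))
                  - (\<Sum>x\<in>{x\<in>S. a < x}. Ind_minus x (rp A) (ip A) - Ind_minus x (ip A) (rp A))"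
proof -
  define P where "P = rp A"
  define Q where "Q = ip A"
  define T where "T = {x\<in>S. a < x \<and> x < b}"
  have fT: "finite T" using finite_spec[of a b Ls] unfolding T_def S_def by (rule rev_finite_subset) auto
  have TS: "T \<subseteq> {a<..<b}" by (auto simp: T_def)
  have I1: "Ind_lt a b P Q = Ind_plus a P Q + (\<Sum>x\<in>T. Ind_at x P Q) - Ind_minus b P Q"
  proof (rule Ind_lt_superset[OF fT TS])
    fix x assume "a < x" "x < b" "Ind_at x P Q \<noteq> 0"
    thus "x \<in> T" using Ind_at_nz_root[of x P Q] spec_root[OF inL(2)] by (auto simp: T_def S_def Q_def)
  qed
  have I2: "Ind_lt a b (- Q) P = Ind_plus a (- Q) P + (\<Sum>x\<in>T. Ind_at x (- Q) P) - Ind_minus b (- Q) P"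
  proof (rule Ind_lt_superset[OF fT TS])
    fix x assume "a < x" "x < b" "Ind_at x (- Q) P \<noteq> 0"
    thus "x \<in> T" using Ind_at_nz_root[of x "- Q" P] spec_root[OF inL(1)] by (auto simp: T_def S_def P_def)
  qed
  have L: "{x\<in>S. x < b} = insert a T" using ab spec_sub[OF ab] spec_ab unfolding T_def S_def by force
  have R: "{x\<in>S. a < x} = insert b T" using ab spec_sub[OF ab] spec_ab unfolding T_def S_def by force
  have aT: "a \<notin> T" and bT: "b \<notin> T" by (auto simp: T_def)
  have "EE a b A = Ind_lt a b P Q + Ind_lt a b (- Q) P" using ab by (simp add: EE_def Ind_def P_def Q_def)
  also have "\<dots> = (Ind_plus a P Q - Ind_plus a Q P) + (\<Sum>x\<in>T. (Ind_plus x P Q - Ind_plus x Q P) - (Ind_minus x P Q - Ind_minus x Q P))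
                  - (Ind_minus b P Q - Ind_minus b Q P)"
    unfolding I1 I2 by (simp add: Ind_plus_uminus Ind_minus_uminus Ind_at_uminus Ind_at_def sum_subtractf sum_negf sum.distrib algebra_simps)
  also have "\<dots> = (\<Sum>x\<in>insert a T. Ind_plus x P Q - Ind_plus x Q P) - (\<Sum>x\<in>insert b T. Ind_minus x P Q - Ind_minus x Q P)"
    using fT aT bT by (simp add: sum_subtractf sum.distrib algebra_simps)
  finally show ?thesis unfolding L R P_def Q_def .
qed


lemma gam_Re_info:
  fixes A :: "'a::linordered_field cpx poly"
  assumes "Re_c (gam A x) \<noteq> 0"
  shows "rp A \<noteq> 0 \<and> order x (rp A) = kA A x \<and> Re_c (gam A x) = poly (cof_at x (rp A)) x"
proof -
  have belowP: "\<forall>i<kA A x. coeff (pcompose (rp A) [:x, 1:]) i = 0" using rp_below_kA by blast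
  show ?thesis using real_part_local(2)[OF belowP Re_gam assms] .
qed

lemma gam_Im_info:
  fixes A :: "'a::linordered_field cpx poly"
  assumes "Im_c (gam A x) \<noteq> 0"
  shows "ip A \<noteq> 0 \<and> order x (ip A) = kA A x \<and> Im_c (gam A x) = poly (cof_at x (ip A)) x"
proof -
  have belowQ: "\<forall>i<kA A x. coeff (pcompose (ip A) [:x, 1:]) i = 0" using ip_below_kA by blast
  show ?thesis using real_part_local(2)[OF belowQ Im_gam assms] .
qed

lemma Re_c_negpow [simp]: "Re_c ((-1) ^ k * w) = (-1) ^ k * Re_c (w :: 'a::comm_ring_1 cpx)"
  by (induction k) simp_all
lemma Im_c_negpow [simp]: "Im_c ((-1) ^ k * w) = (-1) ^ k * Im_c (w :: 'a::comm_ring_1 cpx)"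
  by (induction k) simp_all

lemma sgn_negpow: "sgn ((-1) ^ k * r) = (-1) ^ k * sgn (r :: 'a::linordered_field)"
  by (simp add: sgn_mult power_sgn)

lemma isg_eqI: "sgn r = sgn s \<Longrightarrow> isg r = isg (s :: 'a::linordered_field)"
  by (metis of_int_eq_iff of_int_isg)

lemma offR_sample:
  fixes A :: "'a::linordered_field cpx poly"
  assumes A: "A \<noteq> 0" and hr: "sgn (poly (rp A) t) = sR (rp A) x" and hi: "sgn (poly (ip A) t) = sR (ip A) x"
  shows "Ind_plus x (rp A) (ip A) - Ind_plus x (ip A) (rp A) = of_int (ioff (gam A x) (poly A (cr t))) / 2"
    and "compat (gam A x) (poly A (cr t))"
proof -
  show "Ind_plus x (rp A) (ip A) - Ind_plus x (ip A) (rp A) = of_int (ioff (gam A x) (poly A (cr t))) / 2"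
    unfolding local_plus[OF A] ioff_def by (simp add: of_int_isg poly_rp poly_ip hr hi)
  show "compat (gam A x) (poly A (cr t))"
    unfolding compat_def
  proof (intro conjI impI)
    assume "Re_c (gam A x) \<noteq> 0"
    from gam_Re_info[OF this] show "isg (Re_c (poly A (cr t))) = isg (Re_c (gam A x))"
      by (intro isg_eqI) (simp add: poly_rp hr sR_def)
  next
    assume "Im_c (gam A x) \<noteq> 0"
    from gam_Im_info[OF this] show "isg (Im_c (poly A (cr t))) = isg (Im_c (gam A x))"
      by (intro isg_eqI) (simp add: poly_ip hi sR_def)
  qed
qed

lemma offL_sample:
  fixes A :: "'a::linordered_field cpx poly"
  assumes A: "A \<noteq> 0" and hr: "sgn (poly (rp A) t) = sL (rp A) x" and hi: "sgn (poly (ip A) t) = sL (ip A) x"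
  shows "Ind_minus x (rp A) (ip A) - Ind_minus x (ip A) (rp A) = of_int (ioff (gam A x) ((-1) ^ kA A x * poly A (cr t))) / 2"
    and "compat (gam A x) ((-1) ^ kA A x * poly A (cr t))"
proof -
  show "Ind_minus x (rp A) (ip A) - Ind_minus x (ip A) (rp A) = of_int (ioff (gam A x) ((-1) ^ kA A x * poly A (cr t))) / 2"
    unfolding local_minus[OF A] ioff_def Re_c_negpow Im_c_negpow by (simp add: of_int_isg poly_rp poly_ip hr hi sgn_negpow)
  have pp: "((-1::'a) ^ k) * (-1) ^ k = 1" for k by (simp flip: power_add)
  show "compat (gam A x) ((-1) ^ kA A x * poly A (cr t))"
    unfolding compat_def
  proof (intro conjI impI)
    assume "Re_c (gam A x) \<noteq> 0"
    from gam_Re_info[OF this] show "isg (Re_c ((-1) ^ kA A x * poly A (cr t))) = isg (Re_c (gam A x))"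
      unfolding Re_c_negpow by (intro isg_eqI) (simp add: poly_rp hr sL_def sR_def sgn_negpow mult.assoc[symmetric] pp)
  next
    assume "Im_c (gam A x) \<noteq> 0"
    from gam_Im_info[OF this] show "isg (Im_c ((-1) ^ kA A x * poly A (cr t))) = isg (Im_c (gam A x))"
      unfolding Im_c_negpow by (intro isg_eqI) (simp add: poly_ip hi sL_def sR_def sgn_negpow mult.assoc[symmetric] pp)
  qed
qed

lemma gam_kA_mult:
  fixes A1 A2 :: "'a::linordered_field cpx poly"
  assumes "A1 \<noteq> 0" "A2 \<noteq> 0"
  shows "gam (A1 * A2) x = gam A1 x * gam A2 x" "kA (A1 * A2) x = kA A1 x + kA A2 x"
  using ordc_mult_lowc[of "sh A1 x" "sh A2 x"] assms
  by (simp_all add: gam_def kA_def sh_mult sh_eq_0_iff)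


theorem edge_product:
  fixes A1 A2 :: "'a::real_closed_field cpx poly"
  assumes A1: "A1 \<noteq> 0" and A2: "A2 \<noteq> 0" and ab: "a < b"
  shows "EE a b (A1 * A2) = EE a b A1 + EE a b A2
           + of_int (Kw (gam A1 a) (gam A2 a) - Kw (gam A1 b) (gam A2 b)) / 2"
proof -
  define A where "A = A1 * A2"
  have A: "A \<noteq> 0" using A1 A2 by (simp add: A_def)
  define Ls where "Ls = [rp A1, ip A1, rp A2, ip A2, rp A, ip A]"
  define S where "S = spec a b Ls"
  have fS: "finite S" unfolding S_def by (rule finite_spec)
  have aS: "a \<in> S" and bS: "b \<in> S" unfolding S_def by (rule spec_ab)+
  have Ssub: "S \<subseteq> {a..b}" unfolding S_def by (rule spec_sub[OF ab])
  define tR where "tR x = (x + nxt S x) / 2" for x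
  define tL where "tL y = (prv S y + y) / 2" for y
  define R where "R = {x\<in>S. x < b}"
  define L where "L = {y\<in>S. a < y}"
  have noR: "poly p y \<noteq> 0" if "x \<in> R" "p \<in> set Ls" "p \<noteq> 0" "x < y" "y \<le> tR x" for x p y
  proof
    assume py: "poly p y = 0"
    have xS: "x \<in> S" "x < b" using that(1) by (auto simp: R_def)
    note N = nxt_props[OF fS bS xS(2)]
    have "y < nxt S x" using that(5) N(2) by (simp add: tR_def field_simps)
    moreover have "nxt S x \<le> b" using N(1) Ssub by auto
    moreover have "a \<le> x" using xS Ssub by auto
    ultimately have "y \<in> S" unfolding S_def using spec_root[OF that(2,3)] py that(4) by auto
    hence "nxt S x \<le> y" using N(3) that(4) by blast
    thus False using \<open>y < nxt S x\<close> by simp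
  qed
  have noL: "poly p y \<noteq> 0" if "x \<in> L" "p \<in> set Ls" "p \<noteq> 0" "tL x \<le> y" "y < x" for x p y
  proof
    assume py: "poly p y = 0"
    have xS: "x \<in> S" "a < x" using that(1) by (auto simp: L_def)
    note Pr = prv_props[OF fS aS xS(2)]
    have "prv S x < y" using that(4) Pr(2) by (simp add: tL_def field_simps)
    moreover have "a \<le> prv S x" using Pr(1) Ssub by auto
    moreover have "x \<le> b" using xS Ssub by auto
    ultimately have "y \<in> S" unfolding S_def using spec_root[OF that(2,3)] py that(5) by auto
    hence "y \<le> prv S x" using Pr(3) that(5) by blast
    thus False using \<open>prv S x < y\<close> by simp
  qed
  have tRgt: "x < tR x" if "x \<in> R" for x
    using nxt_props(2)[OF fS bS, of x] that by (auto simp: R_def tR_def field_simps)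
  have tLlt: "tL x < x" if "x \<in> L" for x
    using prv_props(2)[OF fS aS, of x] that by (auto simp: L_def tL_def field_simps)
  have sampR: "sgn (poly p (tR x)) = sR p x" if "x \<in> R" "p \<in> set Ls" for x p
  proof (cases "p = 0")
    case True thus ?thesis by simp
  next
    case False
    show ?thesis by (rule sample_right[OF False tRgt[OF that(1)]]) (use noR[OF that False] in auto)
  qed
  have sampL: "sgn (poly p (tL x)) = sL p x" if "x \<in> L" "p \<in> set Ls" for x p
  proof (cases "p = 0")
    case True thus ?thesis by simp
  next
    case False
    show ?thesis by (rule sample_left[OF False tLlt[OF that(1)]]) (use noL[OF that False] in auto)
  qed
  have wnzR: "poly B (cr (tR x)) \<noteq> 0" if "x \<in> R" "B \<noteq> 0" "rp B \<in> set Ls" "ip B \<in> set Ls" for x B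
  proof
    assume "poly B (cr (tR x)) = 0"
    hence "poly (rp B) (tR x) = 0" "poly (ip B) (tR x) = 0"
      by (metis Re_c_0 poly_rp, metis Im_c_0 poly_ip)
    moreover have "rp B \<noteq> 0 \<or> ip B \<noteq> 0" using that(2) rp_ip_eq_0_iff by blast
    ultimately show False using noR[OF that(1) that(3)] noR[OF that(1) that(4)] tRgt[OF that(1)] by auto
  qed
  have wnzL: "poly B (cr (tL x)) \<noteq> 0" if "x \<in> L" "B \<noteq> 0" "rp B \<in> set Ls" "ip B \<in> set Ls" for x B
  proof
    assume "poly B (cr (tL x)) = 0"
    hence "poly (rp B) (tL x) = 0" "poly (ip B) (tL x) = 0"
      by (metis Re_c_0 poly_rp, metis Im_c_0 poly_ip)
    moreover have "rp B \<noteq> 0 \<or> ip B \<noteq> 0" using that(2) rp_ip_eq_0_iff by blast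
    ultimately show False using noL[OF that(1) that(3)] noL[OF that(1) that(4)] tLlt[OF that(1)] by auto
  qed
  define fR where "fR B x = Ind_plus x (rp B) (ip B) - Ind_plus x (ip B) (rp B)" for B and x :: 'a
  define fL where "fL B x = Ind_minus x (rp B) (ip B) - Ind_minus x (ip B) (rp B)" for B and x :: 'a
  have dec: "EE a b B = (\<Sum>x\<in>R. fR B x) - (\<Sum>x\<in>L. fL B x)" if "rp B \<in> set Ls" "ip B \<in> set Ls" for B
    unfolding fR_def fL_def R_def L_def S_def by (rule EE_decomp[OF ab that])
  have inLs: "rp A1 \<in> set Ls" "ip A1 \<in> set Ls" "rp A2 \<in> set Ls" "ip A2 \<in> set Ls" "rp A \<in> set Ls" "ip A \<in> set Ls"
    by (simp_all add: Ls_def)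
  define KG where "KG x = Kw (gam A1 x) (gam A2 x)" for x
  define KR where "KR x = Kw (poly A1 (cr (tR x))) (poly A2 (cr (tR x)))" for x
  define KL where "KL x = Kw (poly A1 (cr (tL x))) (poly A2 (cr (tL x)))" for x
  have stepR: "fR A x - fR A1 x - fR A2 x = of_int (KG x - KR x) / 2" if "x \<in> R" for x
  proof -
    define w1 where "w1 = poly A1 (cr (tR x))"
    define w2 where "w2 = poly A2 (cr (tR x))"
    note O1 = offR_sample[OF A1 sampR[OF that inLs(1)] sampR[OF that inLs(2)]]
    note O2 = offR_sample[OF A2 sampR[OF that inLs(3)] sampR[OF that inLs(4)]]
    note O = offR_sample[OF A sampR[OF that inLs(5)] sampR[OF that inLs(6)]]
    have gA: "gam A x = gam A1 x * gam A2 x" unfolding A_def by (rule gam_kA_mult(1)[OF A1 A2])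
    have wA: "poly A (cr (tR x)) = w1 * w2" by (simp add: A_def w1_def w2_def)
    have key: "ioff (gam A1 x * gam A2 x) (w1 * w2) = ioff (gam A1 x) w1 + ioff (gam A2 x) w2 + Kw (gam A1 x) (gam A2 x) - Kw w1 w2"
    proof (rule L1)
      show "gam A1 x \<noteq> 0" "gam A2 x \<noteq> 0" using gam_nz A1 A2 by blast+
      show "w1 \<noteq> 0" "w2 \<noteq> 0" unfolding w1_def w2_def using wnzR that A1 A2 inLs by blast+
      show "compat (gam A1 x) w1" "compat (gam A2 x) w2" using O1(2) O2(2) by (simp_all add: w1_def w2_def)
      show "compat (gam A1 x * gam A2 x) (w1 * w2)" using O(2) gA wA by simp
    qed
    have "fR A x - fR A1 x - fR A2 x = of_int (ioff (gam A1 x * gam A2 x) (w1 * w2)) / 2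
            - of_int (ioff (gam A1 x) w1) / 2 - of_int (ioff (gam A2 x) w2) / 2"
      unfolding fR_def O(1) O1(1) O2(1) gA wA w1_def w2_def ..
    also have "\<dots> = of_int (KG x - KR x) / 2"
      unfolding key KG_def KR_def w1_def[symmetric] w2_def[symmetric] by (simp add: field_simps)
    finally show ?thesis .
  qed
  have stepL: "fL A x - fL A1 x - fL A2 x = of_int (KG x - KL x) / 2" if "x \<in> L" for x
  proof -
    define w1 where "w1 = (-1) ^ kA A1 x * poly A1 (cr (tL x))"
    define w2 where "w2 = (-1) ^ kA A2 x * poly A2 (cr (tL x))"
    note O1 = offL_sample[OF A1 sampL[OF that inLs(1)] sampL[OF that inLs(2)]]
    note O2 = offL_sample[OF A2 sampL[OF that inLs(3)] sampL[OF that inLs(4)]]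
    note O = offL_sample[OF A sampL[OF that inLs(5)] sampL[OF that inLs(6)]]
    have gA: "gam A x = gam A1 x * gam A2 x" unfolding A_def by (rule gam_kA_mult(1)[OF A1 A2])
    have kk: "kA A x = kA A1 x + kA A2 x" unfolding A_def by (rule gam_kA_mult(2)[OF A1 A2])
    have pA: "poly A (cr (tL x)) = poly A1 (cr (tL x)) * poly A2 (cr (tL x))" by (simp add: A_def)
    have wA: "(-1) ^ kA A x * poly A (cr (tL x)) = w1 * w2"
      unfolding pA kk w1_def w2_def by (simp add: power_add algebra_simps)
    have nz1: "poly A1 (cr (tL x)) \<noteq> 0" "poly A2 (cr (tL x)) \<noteq> 0" using wnzL that A1 A2 inLs by blast+
    have key: "ioff (gam A1 x * gam A2 x) (w1 * w2) = ioff (gam A1 x) w1 + ioff (gam A2 x) w2 + Kw (gam A1 x) (gam A2 x) - Kw w1 w2"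
    proof (rule L1)
      show "gam A1 x \<noteq> 0" "gam A2 x \<noteq> 0" using gam_nz A1 A2 by blast+
      show "w1 \<noteq> 0" "w2 \<noteq> 0" unfolding w1_def w2_def using nz1 by simp_all
      show "compat (gam A1 x) w1" "compat (gam A2 x) w2" using O1(2) O2(2) by (simp_all add: w1_def w2_def)
      show "compat (gam A1 x * gam A2 x) (w1 * w2)" using O(2) gA wA by simp
    qed
    have Kww: "Kw w1 w2 = KL x" unfolding w1_def w2_def KL_def by (rule Kw_negpow[OF nz1])
    have "fL A x - fL A1 x - fL A2 x = of_int (ioff (gam A1 x * gam A2 x) (w1 * w2)) / 2
            - of_int (ioff (gam A1 x) w1) / 2 - of_int (ioff (gam A2 x) w2) / 2"
      unfolding fL_def O(1) O1(1) O2(1) gA wA w1_def w2_def ..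
    also have "\<dots> = of_int (KG x - KL x) / 2"
      unfolding key KG_def Kww[symmetric] by (simp add: field_simps)
    finally show ?thesis .
  qed
  have reidx: "(\<Sum>x\<in>R. KR x) = (\<Sum>y\<in>L. KL y)"
  proof (rule sum.reindex_bij_witness[where i = "prv S" and j = "nxt S"])
    fix x assume x: "x \<in> R"
    hence xS: "x \<in> S" "x < b" by (auto simp: R_def)
    show "prv S (nxt S x) = x" by (rule prv_nxt[OF fS xS(1) bS xS(2)])
    show "nxt S x \<in> L" using nxt_props(1,2)[OF fS bS xS(2)] xS Ssub by (auto simp: L_def)
    show "KL (nxt S x) = KR x"
      by (simp add: KL_def KR_def tL_def tR_def prv_nxt[OF fS xS(1) bS xS(2)])
  next
    fix y assume y: "y \<in> L"
    hence yS: "y \<in> S" "a < y" by (auto simp: L_def)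
    show "nxt S (prv S y) = y" by (rule nxt_prv[OF fS yS(1) aS yS(2)])
    show "prv S y \<in> R" using prv_props(1,2)[OF fS aS yS(2)] yS Ssub by (auto simp: R_def)
  qed
  define T where "T = {x\<in>S. a < x \<and> x < b}"
  have fT: "finite T" using fS unfolding T_def by simp
  have RT: "R = insert a T" and LT: "L = insert b T" using ab Ssub aS bS by (auto simp: R_def L_def T_def)
  have aT: "a \<notin> T" and bT: "b \<notin> T" by (auto simp: T_def)
  have KGsum: "(\<Sum>x\<in>R. of_int (KG x) :: 'a) - (\<Sum>x\<in>L. of_int (KG x)) = of_int (KG a) - of_int (KG b)"
    unfolding RT LT using fT aT bT by simp
  have "EE a b A - EE a b A1 - EE a b A2 =
        (\<Sum>x\<in>R. fR A x - fR A1 x - fR A2 x) - (\<Sum>x\<in>L. fL A x - fL A1 x - fL A2 x)"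
    unfolding dec[OF inLs(5,6)] dec[OF inLs(1,2)] dec[OF inLs(3,4)] by (simp add: sum_subtractf)
  also have "\<dots> = (\<Sum>x\<in>R. of_int (KG x - KR x) / 2) - (\<Sum>x\<in>L. of_int (KG x - KL x) / 2)"
    by (intro arg_cong2[where f = "(-)"] sum.cong refl) (simp_all add: stepR stepL)
  also have "\<dots> = ((\<Sum>x\<in>R. of_int (KG x)) - (\<Sum>x\<in>L. of_int (KG x)) - (of_int (\<Sum>x\<in>R. KR x) - of_int (\<Sum>x\<in>L. KL x))) / 2"
    by (simp add: sum_subtractf sum_divide_distrib[symmetric] field_simps)
  also have "\<dots> = of_int (KG a - KG b) / 2" unfolding KGsum reidx by simp
  finally have H: "EE a b A - EE a b A1 - EE a b A2 = of_int (KG a - KG b) / 2" .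
  show ?thesis using H unfolding A_def KG_def by linarith
qed


definition hY :: "'a::comm_ring_1 cpx poly poly \<Rightarrow> 'a \<Rightarrow> 'a cpx poly" where
  "hY F y = poly F [:cr y:]"
definition vX :: "'a::comm_ring_1 cpx poly poly \<Rightarrow> 'a \<Rightarrow> 'a cpx poly" where
  "vX F x = map_poly (\<lambda>p. poly p (cr x)) F"

lemma rp_cr_const [simp]: "rp [:cr y:] = [:y:]" and ip_cr_const [simp]: "ip [:cr y:] = 0"
  by (simp_all add: cr_def)

lemma at_Y_re2: "at_Y (re2 F) y = rp (hY F y)"
proof (induction F)
  case 0 thus ?case by (simp add: at_Y_def re2_def hY_def)
next
  case (pCons a F)
  have "at_Y (re2 (pCons a F)) y = map_poly Re_c a + [:y:] * at_Y (re2 F) y"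
    by (simp add: at_Y_def re2_def map_poly_pCons)
  also have "\<dots> = rp (hY (pCons a F) y)"
    by (simp add: hY_def rp_mult pCons.IH rp_def[symmetric])
  finally show ?case .
qed

lemma at_Y_im2: "at_Y (im2 F) y = ip (hY F y)"
proof (induction F)
  case 0 thus ?case by (simp add: at_Y_def im2_def hY_def)
next
  case (pCons a F)
  have "at_Y (im2 (pCons a F)) y = map_poly Im_c a + [:y:] * at_Y (im2 F) y"
    by (simp add: at_Y_def im2_def map_poly_pCons)
  also have "\<dots> = ip (hY (pCons a F) y)"
    by (simp add: hY_def ip_mult pCons.IH ip_def[symmetric])
  finally show ?case .
qed

lemma at_X_re2: "at_X (re2 F) x = rp (vX F x)"
proof -
  have "at_X (re2 F) x = map_poly ((\<lambda>p. poly p x) \<circ> map_poly Re_c) F"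
    unfolding at_X_def re2_def by (rule map_poly_map_poly) simp_all
  also have "\<dots> = map_poly (Re_c \<circ> (\<lambda>p. poly p (cr x))) F"
    by (rule map_poly_cong) (simp add: poly_rp rp_def)
  also have "\<dots> = rp (vX F x)"
    unfolding rp_def vX_def by (rule map_poly_map_poly[symmetric]) simp_all
  finally show ?thesis .
qed

lemma at_X_im2: "at_X (im2 F) x = ip (vX F x)"
proof -
  have "at_X (im2 F) x = map_poly ((\<lambda>p. poly p x) \<circ> map_poly Im_c) F"
    unfolding at_X_def im2_def by (rule map_poly_map_poly) simp_all
  also have "\<dots> = map_poly (Im_c \<circ> (\<lambda>p. poly p (cr x))) F"
    by (rule map_poly_cong) (simp add: poly_ip ip_def)
  also have "\<dots> = ip (vX F x)"
    unfolding ip_def vX_def by (rule map_poly_map_poly[symmetric]) simp_all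
  finally show ?thesis .
qed

lemma hY_ii: "hY ([:[:ii:]:] * F) y = smult ii (hY F y)"
  by (simp add: hY_def)

lemma vX_ii: "vX ([:[:ii:]:] * F) x = smult ii (vX F x)"
  by (rule poly_eqI) (simp add: vX_def coeff_map_poly)

lemma hY_mult: "hY (F * G) y = hY F y * hY G y"
  by (simp add: hY_def)

lemma vX_mult: "vX (F * G) x = vX F x * vX (G :: 'a::comm_ring_1 cpx poly poly) x"
  unfolding vX_def by (rule map_poly_mult_hom) simp_all

lemma Ind_rev: "a < b \<Longrightarrow> Ind b a P Q = - Ind a b P Q"
  by (simp add: Ind_def)

lemma EE_rev: "a < b \<Longrightarrow> EE b a A = - EE a b A"
  by (simp add: EE_def Ind_rev)

lemma Wind_EE:
  "Wind F x0 x1 y0 y1 = (EE x0 x1 (hY F y0) + EE y0 y1 (vX F x1) + EE x1 x0 (hY F y1) + EE y1 y0 (vX F x0)) / 4"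
  unfolding Wind_def wind_def EE_def at_Y_re2 at_Y_im2 at_X_re2 at_X_im2 hY_ii vX_ii rp_smult_ii ip_smult_ii
  by (simp add: field_simps)

section \<open>The embedding of C[Z]\<close>

definition emb :: "'a::comm_ring_1 cpx \<Rightarrow> 'a cpx poly \<Rightarrow> 'a cpx poly poly" where
  "emb u F = poly (map_poly (\<lambda>c. [:[:c:]:]) F) [:[:0, 1:], [:u:]:]"

lemma embedZ_emb: "embedZ F = emb ii F"
  by (simp add: embedZ_def emb_def)

lemma cnj_uminus: "cnj (- x) = - cnj (x :: 'a::comm_ring_1 cpx)"
  by (simp add: cpx_eq_iff)

lemma cnj_ii: "cnj ii = - (ii :: 'a::comm_ring_1 cpx)"
  by (simp add: cpx_eq_iff)

lemma map_poly_cnj_mult: "map_poly cnj (p * q) = map_poly cnj p * map_poly cnj (q :: 'a::comm_ring_1 cpx poly)"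
  by (rule map_poly_mult_hom) (simp_all add: cnj_add cnj_mult)

lemma map_poly_cnj_add: "map_poly cnj (p + q) = map_poly cnj p + map_poly cnj (q :: 'a::comm_ring_1 cpx poly)"
  by (rule map_poly_add_hom) (simp_all add: cnj_add)

lemma conj2_emb: "conj2 (emb ii G) = emb (- ii) (map_poly cnj G)"
proof -
  have "conj2 (emb ii G) = poly (map_poly (map_poly (map_poly cnj)) (map_poly (\<lambda>c. [:[:c:]:]) G))
                              (map_poly (map_poly cnj) [:[:0, 1:], [:ii:]:])"
    unfolding conj2_def emb_def
    by (rule poly_map_poly_hom[symmetric]) (simp_all add: map_poly_cnj_add map_poly_cnj_mult map_poly_add_hom map_poly_mult_hom)
  also have "map_poly (map_poly (map_poly cnj)) (map_poly (\<lambda>c. [:[:c:]:]) G) = map_poly (\<lambda>c. [:[:c:]:]) (map_poly cnj G)"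
    by (rule poly_eqI) (simp add: coeff_map_poly map_poly_pCons)
  also have "map_poly (map_poly cnj) [:[:0, 1:], [:ii:]:] = [:[:0, 1:], [:- ii:]:]"
    by (simp add: map_poly_pCons cnj_ii)
  finally show ?thesis unfolding emb_def .
qed

lemma emb_mult: "emb u (F * G) = emb u F * emb u G"
proof -
  have "map_poly (\<lambda>c. [:[:c:]:]) (F * G) = map_poly (\<lambda>c. [:[:c:]:]) F * map_poly (\<lambda>c. [:[:c:]:]) (G :: 'a::comm_ring_1 cpx poly)"
    by (rule map_poly_mult_hom) simp_all
  thus ?thesis by (simp add: emb_def)
qed

lemma hY_emb: "hY (emb u F) y = pcompose F [:u * cr y, 1:]"
proof -
  have "hY (emb u F) y = poly (map_poly (\<lambda>W. poly W [:cr y:]) (map_poly (\<lambda>c. [:[:c:]:]) F)) (poly [:[:0, 1:], [:u:]:] [:cr y:])"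
    unfolding hY_def emb_def by (rule poly_map_poly_hom[symmetric]) simp_all
  also have "map_poly (\<lambda>W. poly W [:cr y:]) (map_poly (\<lambda>c. [:[:c:]:]) F) = map_poly (\<lambda>c. [:c:]) F"
    by (rule poly_eqI) (simp add: coeff_map_poly)
  also have "poly [:[:0, 1:], [:u:]:] [:cr y:] = [:u * cr y, 1:]"
    by (simp add: algebra_simps)
  finally show ?thesis by (simp add: pcompose_altdef)
qed

lemma vX_emb: "vX (emb u F) x = pcompose F [:cr x, u:]"
proof -
  have "vX (emb u F) x = poly (map_poly (map_poly (\<lambda>p. poly p (cr x))) (map_poly (\<lambda>c. [:[:c:]:]) F))
                              (map_poly (\<lambda>p. poly p (cr x)) [:[:0, 1:], [:u:]:])"
    unfolding vX_def emb_def
    by (rule poly_map_poly_hom[symmetric]) (simp_all add: map_poly_add_hom map_poly_mult_hom)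
  also have "map_poly (map_poly (\<lambda>p. poly p (cr x))) (map_poly (\<lambda>c. [:[:c:]:]) F) = map_poly (\<lambda>c. [:c:]) F"
    by (rule poly_eqI) (simp add: coeff_map_poly map_poly_pCons)
  also have "map_poly (\<lambda>p. poly p (cr x)) [:[:0, 1:], [:u:]:] = [:cr x, u:]"
    by (simp add: map_poly_pCons)
  finally show ?thesis by (simp add: pcompose_altdef)
qed


section \<open>Corners\<close>

lemma pcompose_lin_shift: "pcompose (pcompose F [:c, u:]) [:d, 1:] = pcompose F [:c + u * d, u:]"
  for F :: "'b::comm_ring_1 poly"
proof -
  have "pcompose [:c, u:] [:d, 1:] = [:c + u * d, u:]" by (simp add: pcompose_pCons algebra_simps)
  thus ?thesis by (simp add: pcompose_assoc[symmetric])
qed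

lemma pcompose_split: "pcompose F [:z, u:] = pcompose (pcompose F [:z, 1:]) [:0, u:]"
  for F :: "'b::comm_ring_1 poly"
proof -
  have "pcompose [:z, 1:] [:0, u:] = [:z, u:]" by (simp add: pcompose_pCons)
  thus ?thesis by (simp add: pcompose_assoc[symmetric])
qed

lemma pcompose_lin_nz: "F \<noteq> 0 \<Longrightarrow> u \<noteq> 0 \<Longrightarrow> pcompose F [:c, u:] \<noteq> (0 :: 'a::linordered_field cpx poly)"
  by (subst pcompose_eq_0_iff) auto

lemma low_lin:
  fixes C :: "'a::linordered_field cpx poly"
  assumes C: "C \<noteq> 0" and u: "u \<noteq> 0"
  shows "lowc (pcompose C [:0, u:]) = u ^ ordc C * lowc C"
proof -
  have c: "coeff (pcompose C [:0, u:]) i = u ^ i * coeff C i" for i by (rule coeff_pcompose_linear)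
  have "ordc (pcompose C [:0, u:]) = ordc C"
  proof (rule ordc_eqI)
    show "coeff (pcompose C [:0, u:]) (ordc C) \<noteq> 0" using lowc_nz[OF C] u by (simp add: c lowc_def)
    show "coeff (pcompose C [:0, u:]) i = 0" if "i < ordc C" for i using coeff_below_ordc[OF that] by (simp add: c)
  qed
  thus ?thesis by (simp add: lowc_def c)
qed

lemma map_poly_cnj_nz: "G \<noteq> 0 \<Longrightarrow> map_poly cnj G \<noteq> (0 :: 'a::comm_ring_1 cpx poly)"
  by (subst map_poly_eq_0_iff) (auto simp: cpx_eq_iff)

lemma sh_lin1: "sh (pcompose F [:u * cr y, 1:]) x = pcompose F [:cr x + u * cr y, 1:]"
  unfolding sh_def pcompose_lin_shift by (simp add: add.commute)

lemma sh_linu: "sh (pcompose F [:cr x, u:]) y = pcompose F [:cr x + u * cr y, u:]"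
  unfolding sh_def pcompose_lin_shift ..

lemma ii_pow3: "ii ^ 3 = - (ii :: 'a::comm_ring_1 cpx)"
  by (simp add: cpx_eq_iff power3_eq_cube)

lemma corner_gam:
  fixes F G :: "'a::linordered_field cpx poly"
  assumes F: "F \<noteq> 0" and G: "G \<noteq> 0"
  defines "\<Phi> \<equiv> emb ii F * emb (- ii) G"
  shows "\<exists>j. gam (vX \<Phi> x) y = ii ^ j * gam (hY \<Phi> y) x"
proof -
  have nii: "ii \<noteq> (0 :: 'a cpx)" "- ii \<noteq> (0 :: 'a cpx)" by (simp_all add: cpx_eq_0_iff)
  define Fz where "Fz = pcompose F [:cr x + ii * cr y, 1:]"
  define Gz where "Gz = pcompose G [:cr x + (- ii) * cr y, 1:]"
  have Fz: "Fz \<noteq> 0" unfolding Fz_def by (rule pcompose_lin_nz[OF F]) simp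
  have Gz: "Gz \<noteq> 0" unfolding Gz_def by (rule pcompose_lin_nz[OF G]) simp
  have h: "sh (hY \<Phi> y) x = Fz * Gz"
    unfolding \<Phi>_def hY_mult hY_emb sh_mult sh_lin1 Fz_def Gz_def ..
  have v: "sh (vX \<Phi> x) y = pcompose Fz [:0, ii:] * pcompose Gz [:0, - ii:]"
    unfolding \<Phi>_def vX_mult vX_emb sh_mult sh_linu Fz_def Gz_def
    by (subst (1 2) pcompose_split) simp
  have gh: "gam (hY \<Phi> y) x = lowc Fz * lowc Gz"
    unfolding gam_def h using ordc_mult_lowc[OF Fz Gz] by simp
  have F0: "pcompose Fz [:0, ii:] \<noteq> 0" "pcompose Gz [:0, - ii:] \<noteq> 0"
    using pcompose_lin_nz[OF Fz nii(1)] pcompose_lin_nz[OF Gz nii(2)] by simp_all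
  have gv: "gam (vX \<Phi> x) y = (ii ^ ordc Fz * lowc Fz) * ((- ii) ^ ordc Gz * lowc Gz)"
    unfolding gam_def v using ordc_mult_lowc[OF F0] low_lin[OF Fz nii(1)] low_lin[OF Gz nii(2)] by simp
  have "(- ii) ^ ordc Gz = (ii :: 'a cpx) ^ (3 * ordc Gz)"
    by (simp add: power_mult ii_pow3)
  hence "gam (vX \<Phi> x) y = ii ^ (ordc Fz + 3 * ordc Gz) * gam (hY \<Phi> y) x"
    unfolding gv gh by (simp add: power_add algebra_simps)
  thus ?thesis by blast
qed

lemma hY_nz:
  fixes F G :: "'a::linordered_field cpx poly"
  assumes "F \<noteq> 0" "G \<noteq> 0"
  shows "hY (emb ii F * emb (- ii) G) y \<noteq> 0"
proof -
  have a: "pcompose F [:ii * cr y, 1:] \<noteq> 0" by (rule pcompose_lin_nz[OF assms(1)]) simp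
  have b: "pcompose G [:(- ii) * cr y, 1:] \<noteq> 0" by (rule pcompose_lin_nz[OF assms(2)]) simp
  have "hY (emb ii F * emb (- ii) G) y = pcompose F [:ii * cr y, 1:] * pcompose G [:(- ii) * cr y, 1:]"
    by (simp only: hY_mult hY_emb)
  thus ?thesis using a b by simp
qed

lemma vX_nz:
  fixes F G :: "'a::linordered_field cpx poly"
  assumes "F \<noteq> 0" "G \<noteq> 0"
  shows "vX (emb ii F * emb (- ii) G) x \<noteq> 0"
proof -
  have "ii \<noteq> (0 :: 'a cpx)" "- ii \<noteq> (0 :: 'a cpx)" by (simp_all add: cpx_eq_0_iff)
  hence a: "pcompose F [:cr x, ii:] \<noteq> 0" and b: "pcompose G [:cr x, - ii:] \<noteq> 0"
    using pcompose_lin_nz assms by blast+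
  have "vX (emb ii F * emb (- ii) G) x = pcompose F [:cr x, ii:] * pcompose G [:cr x, - ii:]"
    by (simp only: vX_mult vX_emb)
  thus ?thesis using a b by simp
qed

lemma corner_Kw:
  fixes F1 G1 F2 G2 :: "'a::linordered_field cpx poly"
  assumes "F1 \<noteq> 0" "G1 \<noteq> 0" "F2 \<noteq> 0" "G2 \<noteq> 0"
  defines "\<Phi>1 \<equiv> emb ii F1 * emb (- ii) G1" and "\<Phi>2 \<equiv> emb ii F2 * emb (- ii) G2"
  shows "Kw (gam (vX \<Phi>1 x) y) (gam (vX \<Phi>2 x) y) = Kw (gam (hY \<Phi>1 y) x) (gam (hY \<Phi>2 y) x)"
proof -
  obtain j1 where j1: "gam (vX \<Phi>1 x) y = ii ^ j1 * gam (hY \<Phi>1 y) x" using corner_gam assms unfolding \<Phi>1_def by blast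
  obtain j2 where j2: "gam (vX \<Phi>2 x) y = ii ^ j2 * gam (hY \<Phi>2 y) x" using corner_gam assms unfolding \<Phi>2_def by blast
  have nz: "gam (hY \<Phi>1 y) x \<noteq> 0" "gam (hY \<Phi>2 y) x \<noteq> 0"
    using gam_nz hY_nz assms unfolding \<Phi>1_def \<Phi>2_def by blast+
  have "ii ^ j2 * gam (hY \<Phi>2 y) x \<noteq> 0" using nz(2) by simp
  hence "Kw (ii ^ j1 * gam (hY \<Phi>1 y) x) (ii ^ j2 * gam (hY \<Phi>2 y) x) = Kw (gam (hY \<Phi>1 y) x) (ii ^ j2 * gam (hY \<Phi>2 y) x)"
    using Kw_pow_ii1 nz(1) by blast
  also have "\<dots> = Kw (gam (hY \<Phi>1 y) x) (gam (hY \<Phi>2 y) x)" using Kw_pow_ii2 nz by blast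
  finally show ?thesis unfolding j1 j2 .
qed


theorem proposition3p4:
  fixes F G H I :: "'a::real_closed_field cpx poly"
    and x0 x1 y0 y1 :: 'a
  assumes "F \<noteq> 0" "G \<noteq> 0" "H \<noteq> 0" "I \<noteq> 0"
    and "x0 < x1" "y0 < y1"
  shows "Wind_frac (F * H) (G * I) x0 x1 y0 y1
       = Wind_frac F G x0 x1 y0 y1 + Wind_frac H I x0 x1 y0 y1"
proof -
  note nz = assms(1-4)
  note x01 = assms(5) and y01 = assms(6)
  define G' where "G' = map_poly cnj G"
  define I' where "I' = map_poly cnj I"
  have G': "G' \<noteq> 0" and I': "I' \<noteq> 0" using map_poly_cnj_nz nz unfolding G'_def I'_def by blast+
  define P1 where "P1 = emb ii F * emb (- ii) G'"
  define P2 where "P2 = emb ii H * emb (- ii) I'"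
  have e1: "embedZ F * conj2 (embedZ G) = P1" by (simp add: P1_def G'_def embedZ_emb conj2_emb)
  have e2: "embedZ H * conj2 (embedZ I) = P2" by (simp add: P2_def I'_def embedZ_emb conj2_emb)
  have c2m: "conj2 (U * V) = conj2 U * conj2 V" for U V :: "'a cpx poly poly"
    unfolding conj2_def by (rule map_poly_mult_hom) (simp_all add: map_poly_cnj_add map_poly_cnj_mult)
  have "embedZ (F * H) * conj2 (embedZ (G * I)) = (emb ii F * emb ii H) * (conj2 (emb ii G) * conj2 (emb ii I))"
    by (simp only: embedZ_emb emb_mult c2m)
  also have "\<dots> = P1 * P2" by (simp add: P1_def P2_def G'_def I'_def conj2_emb algebra_simps)
  finally have e12: "embedZ (F * H) * conj2 (embedZ (G * I)) = P1 * P2" .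
  have hnz1: "hY P1 y \<noteq> 0" and hnz2: "hY P2 y \<noteq> 0" for y
    unfolding P1_def P2_def using hY_nz nz G' I' by blast+
  have vnz1: "vX P1 x \<noteq> 0" and vnz2: "vX P2 x \<noteq> 0" for x
    unfolding P1_def P2_def using vX_nz nz G' I' by blast+
  define KH where "KH y x = Kw (gam (hY P1 y) x) (gam (hY P2 y) x)" for y x
  have corner: "Kw (gam (vX P1 x) y) (gam (vX P2 x) y) = KH y x" for x y
    unfolding KH_def P1_def P2_def by (rule corner_Kw) (use nz G' I' in auto)
  have E1: "EE x0 x1 (hY (P1 * P2) y0) = EE x0 x1 (hY P1 y0) + EE x0 x1 (hY P2 y0) + of_int (KH y0 x0 - KH y0 x1) / 2"
    unfolding hY_mult KH_def by (rule edge_product[OF hnz1 hnz2 x01])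
  have E3: "EE x0 x1 (hY (P1 * P2) y1) = EE x0 x1 (hY P1 y1) + EE x0 x1 (hY P2 y1) + of_int (KH y1 x0 - KH y1 x1) / 2"
    unfolding hY_mult KH_def by (rule edge_product[OF hnz1 hnz2 x01])
  have E2: "EE y0 y1 (vX (P1 * P2) x1) = EE y0 y1 (vX P1 x1) + EE y0 y1 (vX P2 x1) + of_int (KH y0 x1 - KH y1 x1) / 2"
    unfolding vX_mult corner[symmetric] by (rule edge_product[OF vnz1 vnz2 y01])
  have E4: "EE y0 y1 (vX (P1 * P2) x0) = EE y0 y1 (vX P1 x0) + EE y0 y1 (vX P2 x0) + of_int (KH y0 x0 - KH y1 x0) / 2"
    unfolding vX_mult corner[symmetric] by (rule edge_product[OF vnz1 vnz2 y01])
  have W: "Wind P x0 x1 y0 y1 = (EE x0 x1 (hY P y0) + EE y0 y1 (vX P x1) - EE x0 x1 (hY P y1) - EE y0 y1 (vX P x0)) / 4" for P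
    unfolding Wind_EE EE_rev[OF x01] EE_rev[OF y01] by simp
  have "Wind_frac (F * H) (G * I) x0 x1 y0 y1 = Wind (P1 * P2) x0 x1 y0 y1" by (simp add: Wind_frac_def e12)
  also have "\<dots> = Wind P1 x0 x1 y0 y1 + Wind P2 x0 x1 y0 y1"
    unfolding W E1 E2 E3 E4 by (simp add: field_simps)
  also have "\<dots> = Wind_frac F G x0 x1 y0 y1 + Wind_frac H I x0 x1 y0 y1" by (simp add: Wind_frac_def e1 e2)
  finally show ?thesis .
qed


end
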